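(* Let $K$ be a number field, $\mathfrak{p}$ a prime of $K$ above a rational prime $p\ge3$, $K_{\mathfrak{p}}$ the completion, $\mathfrak{o}_v$ its valuation ring, and let $N\ge2$. Let $Y=\mathfrak{o}_v^N$ be the $N$-dimensional unit disk, $F:Y\to Y$ an endomorphism defined over $K_{\mathfrak{p}}$, $V'\subseteq Y$ an analytic subvariety defined over $K_{\mathfrak{p}}$, and $a\in Y(\mathfrak{o}_v)$. Assume: (1) $a=(a_1,\dots,a_N)$ with each $a_i\in\mathfrak{p}$; (2) $F=(F_1,\dots,F_N)$ with $F_i\in\mathfrak{o}_v\langle x_1,\dots,x_N\rangle$, and for each $i$, $F_i(x)\equiv\sum_{j=1}^N a_{ij}x_j\pmod{\mathfrak{p}}$ with $a_{ij}\in\mathfrak{o}_v$, where the matrix $A=(a_{ij})$ satisfies $A^2=A$; (3) there are $c>1/(p-1)$ and $g\in\mathfrak{o}_v\langle x_1,\dots,x_N,z\rangle^N$ with $\|g(x,n)-F^n(x)\|\le p^{-nc}$ for all $n\in\mathbb{Z}_{\ge0}$; setting $G(n)=g(a,n)$ for $n\in\mathfrak{o}_v$, there is no $M\in\mathbb{N}$ such that $G(n)\in V'$ for all $n\ge M$; (4) for every $n\in\mathbb{N}$, the orbit of $a$ under $F^n$ does not converge $\mathfrak{p}$-adically to a periodic point of $F$ lying on $V'$. Then the set $S_{V'}:=\{n\in\mathbb{N}_{\ge0}:~F^n(a)\in V'(K_{\mathfrak{p}})\}$ satisfies, for every fixed $m\in\mathbb{N}_{>0}$, $$\#\{i\le n:~i\in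 S_{V'}\}=o(\log^{(m)}(n))\quad\text{as } n\to\infty,$$ where $\log^{(m)}$ is the $m$-th iterated logarithm.
   Context: For $h\in\mathfrak{o}_v[x_1,\dots,x_m]$, $\|h\|$ is the supremum of the $\mathfrak{p}$-adic absolute values of its coefficients, and $\mathfrak{o}_v\langle x_1,\dots,x_m\rangle$ (the Tate algebra) is the completion of $\mathfrak{o}_v[x_1,\dots,x_m]$ with respect to $\|\cdot\|$, i.e. power series whose coefficients tend to $0$. For vectors, $\|(y_1,\dots,y_N)\|=\max_i|y_i|_{\mathfrak{p}}$, and the norm of a tuple of power series is the maximum of the norms of its entries. Congruence modulo $\mathfrak{p}$ of power series is coefficientwise. *)

theory Defs
  imports Complex_Main "HOL-Library.Landau_Symbols" "HOL-Computational_Algebra.Primes"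
begin

text \<open>Abstract model of K_p: a field with a non-archimedean absolute value av,
 normalised by av p = 1/p, complete, discretely valued, with finite residue field.\<close>

definition nonarch_local_field :: "('k::field \<Rightarrow> real) \<Rightarrow> nat \<Rightarrow> bool" where
  "nonarch_local_field av p \<longleftrightarrow>
     (\<forall>x. 0 \<le> av x) \<and> (\<forall>x. av x = 0 \<longleftrightarrow> x = 0) \<and>
     (\<forall>x y. av (x * y) = av x * av y) \<and>
     (\<forall>x y. av (x + y) \<le> max (av x) (av y)) \<and>
     av (of_nat p) = 1 / real p \<and>
     (\<forall>s. (\<forall>e>0. \<exists>M. \<forall>m\<ge>M. \<forall>n\<ge>M. av (s m - s n) < e) \<longrightarrow>
          (\<exists>L. (\<lambda>n. av (s n - L)) \<longlonglongrightarrow> 0)) \<and>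
     (\<exists>\<pi>. av \<pi> < 1 \<and> (\<forall>x. av x < 1 \<longrightarrow> av x \<le> av \<pi>)) \<and>
     (\<exists>R. finite R \<and> (\<forall>x. av x \<le> 1 \<longrightarrow> (\<exists>r\<in>R. av (x - r) < 1)))"

definition av_lim :: "('k::field \<Rightarrow> real) \<Rightarrow> (nat \<Rightarrow> 'k) \<Rightarrow> 'k" where
  "av_lim av s = (THE L. (\<lambda>n. av (s n - L)) \<longlonglongrightarrow> 0)"

definition multi :: "nat \<Rightarrow> (nat \<Rightarrow> nat) set" where
  "multi m = {\<alpha>. \<forall>i\<ge>m. \<alpha> i = 0}"

definition mdeg :: "nat \<Rightarrow> (nat \<Rightarrow> nat) \<Rightarrow> nat" where
  "mdeg m \<alpha> = (\<Sum>i<m. \<alpha> i)"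

type_synonym 'k ser = "(nat \<Rightarrow> nat) \<Rightarrow> 'k"

definition ser_one :: "'k::comm_ring_1 ser" where
  "ser_one \<beta> = (if \<beta> = (\<lambda>_. 0) then 1 else 0)"

definition ser_const :: "'k::comm_ring_1 \<Rightarrow> 'k ser" where
  "ser_const c \<beta> = (if \<beta> = (\<lambda>_. 0) then c else 0)"

definition ser_var :: "nat \<Rightarrow> 'k::comm_ring_1 ser" where
  "ser_var i \<beta> = (if \<beta> = (\<lambda>j. if j = i then 1 else 0) then 1 else 0)"

definition ser_mult :: "'k::comm_ring_1 ser \<Rightarrow> 'k ser \<Rightarrow> 'k ser" where
  "ser_mult f g \<beta> = (\<Sum>\<alpha>\<in>{\<alpha>. \<forall>i. \<alpha> i \<le> \<beta> i}. f \<alpha> * g (\<lambda>i. \<beta> i - \<alpha> i))"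

definition ser_pow :: "'k::comm_ring_1 ser \<Rightarrow> nat \<Rightarrow> 'k ser" where
  "ser_pow f k = (ser_mult f ^^ k) ser_one"

fun ser_prodp :: "(nat \<Rightarrow> 'k::comm_ring_1 ser) \<Rightarrow> (nat \<Rightarrow> nat) \<Rightarrow> nat \<Rightarrow> 'k ser" where
  "ser_prodp h \<alpha> 0 = ser_one"
| "ser_prodp h \<alpha> (Suc j) = ser_mult (ser_prodp h \<alpha> j) (ser_pow (h j) (\<alpha> j))"

definition ser_subst :: "('k::field \<Rightarrow> real) \<Rightarrow> nat \<Rightarrow> 'k ser \<Rightarrow> (nat \<Rightarrow> 'k ser) \<Rightarrow> 'k ser" where
  "ser_subst av m f h = (\<lambda>\<beta>. av_lim av
      (\<lambda>d. \<Sum>\<alpha>\<in>{\<alpha>\<in>multi m. mdeg m \<alpha> \<le> d}. f \<alpha> * ser_prodp h \<alpha> m \<beta>))"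

definition ser_eval :: "('k::field \<Rightarrow> real) \<Rightarrow> nat \<Rightarrow> 'k ser \<Rightarrow> (nat \<Rightarrow> 'k) \<Rightarrow> 'k" where
  "ser_eval av m f x = ser_subst av m f (\<lambda>i. ser_const (x i)) (\<lambda>_. 0)"

definition tate :: "('k::field \<Rightarrow> real) \<Rightarrow> nat \<Rightarrow> 'k ser \<Rightarrow> bool" where
  "tate av m f \<longleftrightarrow> (\<forall>\<alpha>. \<alpha> \<notin> multi m \<longrightarrow> f \<alpha> = 0) \<and> (\<forall>\<alpha>. av (f \<alpha>) \<le> 1) \<and>
     (\<forall>e>0. finite {\<alpha>. e \<le> av (f \<alpha>)})"

definition tuple_gnorm :: "('k::field \<Rightarrow> real) \<Rightarrow> nat \<Rightarrow> nat \<Rightarrow> (nat \<Rightarrow> 'k ser) \<Rightarrow> real" where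
  "tuple_gnorm av m N u = Sup ((\<lambda>(i, \<alpha>). av (u i \<alpha>)) ` ({..<N} \<times> multi m))"

definition disk :: "('k::field \<Rightarrow> real) \<Rightarrow> nat \<Rightarrow> (nat \<Rightarrow> 'k) set" where
  "disk av N = {x. (\<forall>i<N. av (x i) \<le> 1) \<and> (\<forall>i\<ge>N. x i = 0)}"

definition pt_dist :: "('k::field \<Rightarrow> real) \<Rightarrow> nat \<Rightarrow> (nat \<Rightarrow> 'k) \<Rightarrow> (nat \<Rightarrow> 'k) \<Rightarrow> real" where
  "pt_dist av N x y = Max ((\<lambda>i. av (x i - y i)) ` {..<N})"

definition analytic_subvariety :: "('k::field \<Rightarrow> real) \<Rightarrow> nat \<Rightarrow> (nat \<Rightarrow> 'k) set \<Rightarrow> bool" where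
  "analytic_subvariety av N V \<longleftrightarrow>
     (\<exists>H. finite H \<and> (\<forall>h\<in>H. tate av N h) \<and>
          V = {x \<in> disk av N. \<forall>h\<in>H. ser_eval av N h x = 0})"

definition Fmap :: "('k::field \<Rightarrow> real) \<Rightarrow> nat \<Rightarrow> (nat \<Rightarrow> 'k ser) \<Rightarrow> (nat \<Rightarrow> 'k) \<Rightarrow> (nat \<Rightarrow> 'k)" where
  "Fmap av N F x = (\<lambda>i. if i < N then ser_eval av N (F i) x else 0)"

fun ser_iter :: "('k::field \<Rightarrow> real) \<Rightarrow> nat \<Rightarrow> (nat \<Rightarrow> 'k ser) \<Rightarrow> nat \<Rightarrow> nat \<Rightarrow> 'k ser" where
  "ser_iter av N F 0 = (\<lambda>i. ser_var i)"
| "ser_iter av N F (Suc n) = (\<lambda>i. ser_subst av N (F i) (ser_iter av N F n))"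

definition lin_ser :: "nat \<Rightarrow> (nat \<Rightarrow> nat \<Rightarrow> 'k::comm_ring_1) \<Rightarrow> nat \<Rightarrow> 'k ser" where
  "lin_ser N A i = (\<lambda>\<beta>. \<Sum>j<N. A i j * ser_var j \<beta>)"

text \<open>g(x, n): substitute z := n (variable index N) into g in N+1 variables.\<close>
definition zsub :: "nat \<Rightarrow> 'k::comm_ring_1 \<Rightarrow> nat \<Rightarrow> 'k ser" where
  "zsub N t = (\<lambda>j. if j < N then ser_var j else ser_const t)"

definition Gpt :: "('k::field \<Rightarrow> real) \<Rightarrow> nat \<Rightarrow> (nat \<Rightarrow> 'k ser) \<Rightarrow> (nat \<Rightarrow> 'k) \<Rightarrow> 'k \<Rightarrow> (nat \<Rightarrow> 'k)" where
  "Gpt av N g a t = (\<lambda>i. if i < N then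
      ser_eval av (Suc N) (g i) (\<lambda>j. if j < N then a j else if j = N then t else 0) else 0)"

end

theory Submission
  imports Defs
begin

locale nav =
  fixes av :: "'k::field \<Rightarrow> real"
  assumes nn: "\<And>x. 0 \<le> av x"
    and z0: "\<And>x. av x = 0 \<longleftrightarrow> x = 0"
    and mult: "\<And>x y. av (x * y) = av x * av y"
    and ultra: "\<And>x y. av (x + y) \<le> max (av x) (av y)"
    and complete: "\<And>s. (\<forall>e>0. \<exists>M. \<forall>m\<ge>M. \<forall>n\<ge>M. av (s m - s n) < e) \<Longrightarrow>
          (\<exists>L. (\<lambda>n. av (s n - L)) \<longlonglongrightarrow> 0)"
begin

lemma av0[simp]: "av 0 = 0" using z0 by simp

lemma av1[simp]: "av 1 = 1"
proof -
  have "av 1 = av 1 * av 1" using mult[of 1 1] by simp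
  moreover have "av 1 \<noteq> 0" using z0 by simp
  ultimately show ?thesis by simp
qed

lemma av_m1[simp]: "av (-1) = 1"
proof -
  have "av (-1) * av (-1) = 1" using mult[of "-1" "-1"] by simp
  then have "(av (-1) - 1) * (av (-1) + 1) = 0" by (simp add: algebra_simps)
  moreover have "av (-1) + 1 \<noteq> 0" using nn[of "-1"] by linarith
  ultimately show ?thesis by simp
qed

lemma av_neg[simp]: "av (- x) = av x"
  using mult[of "-1" x] by simp

lemma av_sub_comm: "av (x - y) = av (y - x)"
  by (metis av_neg minus_diff_eq)

lemma av_pos: "x \<noteq> 0 \<Longrightarrow> 0 < av x"
  using nn[of x] z0[of x] by linarith

lemma av_inverse: "av (inverse x) = inverse (av x)"
proof (cases "x = 0")
  case True then show ?thesis by simp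
next
  case False
  have "av (inverse x) * av x = 1" using mult[of "inverse x" x] False by simp
  moreover have "av x \<noteq> 0" using False z0 by simp
  ultimately show ?thesis by (metis inverse_unique mult.commute)
qed

lemma av_divide: "av (x / y) = av x / av y"
  by (simp add: divide_inverse mult av_inverse)

lemma av_power: "av (x ^ n) = av x ^ n"
  by (induction n) (simp_all add: mult)

lemma av_prod: "av (prod f S) = (\<Prod>i\<in>S. av (f i))"
  by (induction S rule: infinite_finite_induct) (simp_all add: mult)

lemma ultra_le: "av x \<le> B \<Longrightarrow> av y \<le> B \<Longrightarrow> av (x + y) \<le> B"
  using ultra[of x y] by simp

lemma ultra_lt: "av x < B \<Longrightarrow> av y < B \<Longrightarrow> av (x + y) < B"
  using ultra[of x y] by simp

lemma ultra_diff_le: "av x \<le> B \<Longrightarrow> av y \<le> B \<Longrightarrow> av (x - y) \<le> B"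
  using ultra_le[of x B "-y"] by simp

lemma ultra_diff_lt: "av x < B \<Longrightarrow> av y < B \<Longrightarrow> av (x - y) < B"
  using ultra_lt[of x B "-y"] by simp

lemma av_tri: "av (x - z) \<le> max (av (x - y)) (av (y - z))"
  using ultra[of "x - y" "y - z"] by simp

lemma av_sum_le: "0 \<le> B \<Longrightarrow> (\<And>i. i \<in> S \<Longrightarrow> av (f i) \<le> B) \<Longrightarrow> av (sum f S) \<le> B"
  by (induction S rule: infinite_finite_induct) (auto intro!: ultra_le)

lemma av_sum_lt: "0 < B \<Longrightarrow> (\<And>i. i \<in> S \<Longrightarrow> av (f i) < B) \<Longrightarrow> av (sum f S) < B"
  by (induction S rule: infinite_finite_induct) (auto intro!: ultra_lt)

lemma av_strict: "av y < av x \<Longrightarrow> av (x + y) = av x"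
proof -
  assume a: "av y < av x"
  have "av (x + y) \<le> av x" using ultra[of x y] a by simp
  moreover have "av x \<le> max (av (x + y)) (av (-y))" using ultra[of "x + y" "-y"] by simp
  ultimately show ?thesis using a by auto
qed

lemma av_of_nat_le: "av (of_nat n) \<le> 1"
  by (induction n) (auto intro!: ultra_le)

lemma av_of_int_le: "av (of_int n) \<le> 1"
proof -
  have "n = int (nat \<bar>n\<bar>) \<or> n = - int (nat \<bar>n\<bar>)" by arith
  then show ?thesis
    by (metis av_neg av_of_nat_le of_int_minus of_int_of_nat_eq)
qed

lemma av_prod_le1: "(\<And>i. i \<in> S \<Longrightarrow> av (f i) \<le> 1) \<Longrightarrow> av (prod f S) \<le> 1"
  unfolding av_prod by (rule prod_le_1) (auto simp: nn)

lemma av_mult_le1: "av x \<le> 1 \<Longrightarrow> av y \<le> 1 \<Longrightarrow> av (x * y) \<le> 1"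
  by (simp add: mult mult_le_one nn)

lemma av_power_le1: "av x \<le> 1 \<Longrightarrow> av (x ^ n) \<le> 1"
  by (simp add: av_power power_le_one nn)

end


context nav
begin

definition nul :: "('i \<Rightarrow> 'k) \<Rightarrow> 'i set \<Rightarrow> bool" where
  "nul u I \<longleftrightarrow> (\<forall>e>0. finite {i\<in>I. e \<le> av (u i)})"

definition hs :: "('i \<Rightarrow> 'k) \<Rightarrow> 'i set \<Rightarrow> 'k \<Rightarrow> bool" where
  "hs u I L \<longleftrightarrow> (\<forall>e>0. \<exists>F0. finite F0 \<and> F0 \<subseteq> I \<and>
      (\<forall>F. finite F \<longrightarrow> F0 \<subseteq> F \<longrightarrow> F \<subseteq> I \<longrightarrow> av (sum u F - L) < e))"

lemma hsE: assumes "hs u I L" "e > 0"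
  obtains F0 where "finite F0" "F0 \<subseteq> I" "\<And>F. finite F \<Longrightarrow> F0 \<subseteq> F \<Longrightarrow> F \<subseteq> I \<Longrightarrow> av (sum u F - L) < e"
  using assms unfolding hs_def by meson

lemma av_eps0: assumes "\<And>e. e > 0 \<Longrightarrow> av x < e" shows "x = 0"
proof (rule ccontr)
  assume "x \<noteq> 0"
  then have "av x > 0" by (rule av_pos)
  then show False using assms[of "av x"] by simp
qed

lemma hs_unique: assumes "hs u I L" "hs u I M" shows "L = M"
proof -
  have "av (L - M) < e" if e: "e > 0" for e
  proof -
    obtain F1 where F1: "finite F1" "F1 \<subseteq> I"
      "\<And>F. finite F \<Longrightarrow> F1 \<subseteq> F \<Longrightarrow> F \<subseteq> I \<Longrightarrow> av (sum u F - L) < e"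
      by (rule hsE[OF assms(1) e], blast)
    obtain F2 where F2: "finite F2" "F2 \<subseteq> I"
      "\<And>F. finite F \<Longrightarrow> F2 \<subseteq> F \<Longrightarrow> F \<subseteq> I \<Longrightarrow> av (sum u F - M) < e"
      by (rule hsE[OF assms(2) e], blast)
    have a: "av (sum u (F1 \<union> F2) - L) < e" using F1 F2 by (intro F1(3)) auto
    have b: "av (sum u (F1 \<union> F2) - M) < e" using F1 F2 by (intro F2(3)) auto
    have "L - M = (sum u (F1 \<union> F2) - M) - (sum u (F1 \<union> F2) - L)" by simp
    then show ?thesis using ultra_diff_lt[OF b a] by simp
  qed
  then show ?thesis using av_eps0[of "L - M"] by simp
qed

lemma nul_hs_ex: assumes "nul u I" shows "\<exists>L. hs u I L"
proof -
  define Fk where "Fk k = {i\<in>I. 1 / real (Suc k) \<le> av (u i)}" for k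
  have finFk: "finite (Fk k)" for k using assms unfolding nul_def Fk_def by simp
  have monoFk: "k \<le> k' \<Longrightarrow> Fk k \<subseteq> Fk k'" for k k'
  proof -
    assume kk: "k \<le> k'"
    have "1 / real (Suc k') \<le> 1 / real (Suc k)" using kk by (simp add: frac_le)
    then show ?thesis unfolding Fk_def by auto
  qed
  define s where "s k = sum u (Fk k)" for k
  have small: "av (u i) < 1 / real (Suc k)" if "i \<in> I" "i \<notin> Fk k" for i k
    using that unfolding Fk_def by auto
  have diffs: "av (s m - s n) < 1 / real (Suc M)" if "M \<le> m" "m \<le> n" for m n M
  proof -
    have "s n - s m = sum u (Fk n - Fk m)"
      unfolding s_def using monoFk[OF that(2)] finFk by (simp add: sum_diff)
    moreover have "av (sum u (Fk n - Fk m)) < 1 / real (Suc M)"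
    proof (rule av_sum_lt)
      fix i assume "i \<in> Fk n - Fk m"
      then have "av (u i) < 1 / real (Suc m)" using small[of i m] unfolding Fk_def by auto
      also have "\<dots> \<le> 1 / real (Suc M)" using that by (simp add: frac_le)
      finally show "av (u i) < 1 / real (Suc M)" .
    qed simp
    ultimately show ?thesis by (metis av_sub_comm)
  qed
  have cauchy: "\<forall>e>0. \<exists>M. \<forall>m\<ge>M. \<forall>n\<ge>M. av (s m - s n) < e"
  proof (intro allI impI)
    fix e :: real assume e: "e > 0"
    obtain M where M: "1 / real (Suc M) < e"
      using e by (rule nat_approx_posE)
    show "\<exists>M. \<forall>m\<ge>M. \<forall>n\<ge>M. av (s m - s n) < e"
    proof (intro exI allI impI)
      fix m n assume "M \<le> m" "M \<le> n"
      then have "av (s m - s n) < 1 / real (Suc M)"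
        using diffs[of M m n] diffs[of M n m] by (cases "m \<le> n") (auto simp: av_sub_comm)
      then show "av (s m - s n) < e" using M by simp
    qed
  qed
  obtain L where L: "(\<lambda>n. av (s n - L)) \<longlonglongrightarrow> 0" using complete[OF cauchy] by blast
  have "hs u I L" unfolding hs_def
  proof (intro allI impI)
    fix e :: real assume e: "e > 0"
    have ev1: "eventually (\<lambda>n. av (s n - L) < e) sequentially"
      using order_tendstoD(2)[OF L e] by simp
    have ev2: "eventually (\<lambda>n. 1 / real (Suc n) < e) sequentially"
    proof -
      obtain M where M: "1 / real (Suc M) < e" using e by (rule nat_approx_posE)
      show ?thesis unfolding eventually_sequentially
      proof (intro exI allI impI)
        fix n assume "M \<le> n"
        then have "1 / real (Suc n) \<le> 1 / real (Suc M)" by (simp add: frac_le)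
        then show "1 / real (Suc n) < e" using M by simp
      qed
    qed
    obtain N where "\<And>n. n \<ge> N \<Longrightarrow> av (s n - L) < e \<and> 1 / real (Suc n) < e"
      using eventually_conj[OF ev1 ev2] unfolding eventually_sequentially by blast
    then obtain k where k1: "av (s k - L) < e" and k2: "1 / real (Suc k) < e" by blast
    show "\<exists>F0. finite F0 \<and> F0 \<subseteq> I \<and> (\<forall>F. finite F \<longrightarrow> F0 \<subseteq> F \<longrightarrow> F \<subseteq> I \<longrightarrow> av (sum u F - L) < e)"
    proof (intro exI conjI allI impI)
      show "finite (Fk k)" by (rule finFk)
      show "Fk k \<subseteq> I" unfolding Fk_def by auto
      fix F assume F: "finite F" "Fk k \<subseteq> F" "F \<subseteq> I"
      have "sum u F - L = sum u (F - Fk k) + (s k - L)"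
        unfolding s_def using F by (simp add: sum_diff finFk)
      moreover have "av (sum u (F - Fk k)) < e"
      proof (rule av_sum_lt)
        fix i assume "i \<in> F - Fk k"
        then have "av (u i) < 1 / real (Suc k)" using small[of i k] F by auto
        then show "av (u i) < e" using k2 by simp
      qed (rule e)
      ultimately show "av (sum u F - L) < e" using ultra_lt[OF _ k1, of "sum u (F - Fk k)"]
        by (simp add: algebra_simps)
    qed
  qed
  then show ?thesis by blast
qed

lemma hs_exhaust:
  assumes "hs u I L" "\<And>d. finite (A d)" "\<And>d. A d \<subseteq> I" "mono A" "\<And>i. i \<in> I \<Longrightarrow> \<exists>d. i \<in> A d"
  shows "(\<lambda>d. av (sum u (A d) - L)) \<longlonglongrightarrow> 0"
proof (rule LIMSEQ_I)
  fix e :: real assume e: "e > 0"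
  obtain F0 where F0: "finite F0" "F0 \<subseteq> I"
      "\<And>F. finite F \<Longrightarrow> F0 \<subseteq> F \<Longrightarrow> F \<subseteq> I \<Longrightarrow> av (sum u F - L) < e"
    by (rule hsE[OF assms(1) e], blast)
  have "\<exists>d. G \<subseteq> A d" if "finite G" "G \<subseteq> I" for G
    using that
  proof (induction G rule: finite_induct)
    case empty then show ?case by simp
  next
    case (insert i G)
    then obtain d1 where "G \<subseteq> A d1" by auto
    moreover obtain d2 where "i \<in> A d2" using assms(5)[of i] insert.prems by blast
    ultimately have "insert i G \<subseteq> A (max d1 d2)"
    proof -
      have "A d1 \<subseteq> A (max d1 d2)" "A d2 \<subseteq> A (max d1 d2)"
        using assms(4) unfolding mono_def by auto
      then show ?thesis using \<open>G \<subseteq> A d1\<close> \<open>i \<in> A d2\<close> by auto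
    qed
    then show ?case by blast
  qed
  then obtain d where d: "F0 \<subseteq> A d" using F0 by blast
  show "\<exists>no. \<forall>n\<ge>no. norm (av (sum u (A n) - L) - 0) < e"
  proof (intro exI allI impI)
    fix n assume "d \<le> n"
    then have "F0 \<subseteq> A n" using d assms(4) unfolding mono_def by blast
    then show "norm (av (sum u (A n) - L) - 0) < e" using F0(3)[of "A n"] assms(2,3) nn by simp
  qed
qed

lemma av_lim_eq: assumes "(\<lambda>n. av (s n - L)) \<longlonglongrightarrow> 0" shows "av_lim av s = L"
proof -
  have uniq: "M = L" if M: "(\<lambda>n. av (s n - M)) \<longlonglongrightarrow> 0" for M
  proof -
    have "av (M - L) < e" if e: "e > 0" for e
    proof -
      have "eventually (\<lambda>n. av (s n - L) < e) sequentially"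
        using order_tendstoD(2)[OF assms e] by simp
      moreover have "eventually (\<lambda>n. av (s n - M) < e) sequentially"
        using order_tendstoD(2)[OF M e] by simp
      ultimately have "eventually (\<lambda>n. av (s n - L) < e \<and> av (s n - M) < e) sequentially"
        by (rule eventually_conj)
      then obtain N where "\<And>n. n \<ge> N \<Longrightarrow> av (s n - L) < e \<and> av (s n - M) < e"
        unfolding eventually_sequentially by blast
      then obtain n where a: "av (s n - L) < e" and b: "av (s n - M) < e" by blast
      have "M - L = (s n - L) - (s n - M)" by simp
      then show ?thesis using ultra_diff_lt[OF a b] by simp
    qed
    then show ?thesis using av_eps0[of "M - L"] by simp
  qed
  show ?thesis unfolding av_lim_def
    using assms uniq by (rule the_equality)
qed

lemma hs_finite: "finite I \<Longrightarrow> hs u I (sum u I)"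
  unfolding hs_def by (auto intro!: exI[of _ I])

lemma hs_cong: assumes "\<And>i. i \<in> I \<Longrightarrow> u i = v i" shows "hs u I L \<longleftrightarrow> hs v I L"
proof -
  have *: "F \<subseteq> I \<Longrightarrow> sum u F = sum v F" for F using assms by (meson subsetD sum.cong)
  have eq: "(\<forall>F. finite F \<longrightarrow> F0 \<subseteq> F \<longrightarrow> F \<subseteq> I \<longrightarrow> av (sum u F - L) < e) \<longleftrightarrow>
     (\<forall>F. finite F \<longrightarrow> F0 \<subseteq> F \<longrightarrow> F \<subseteq> I \<longrightarrow> av (sum v F - L) < e)" for F0 e
    using * by auto
  show ?thesis unfolding hs_def eq ..
qed

lemma nul_cong: assumes "\<And>i. i \<in> I \<Longrightarrow> u i = v i" shows "nul u I \<longleftrightarrow> nul v I"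
proof -
  have "{i\<in>I. e \<le> av (u i)} = {i\<in>I. e \<le> av (v i)}" for e using assms by auto
  then show ?thesis unfolding nul_def by simp
qed

lemma hs_zero_outside:
  assumes "J \<subseteq> I" "\<And>i. i \<in> I \<Longrightarrow> i \<notin> J \<Longrightarrow> u i = 0"
  shows "hs u I L \<longleftrightarrow> hs u J L"
proof
  assume h: "hs u I L"
  show "hs u J L" unfolding hs_def
  proof (intro allI impI)
    fix e :: real assume e: "e > 0"
    obtain F0 where F0: "finite F0" "F0 \<subseteq> I"
      "\<And>F. finite F \<Longrightarrow> F0 \<subseteq> F \<Longrightarrow> F \<subseteq> I \<Longrightarrow> av (sum u F - L) < e"
      by (rule hsE[OF h e], blast)
    show "\<exists>F0. finite F0 \<and> F0 \<subseteq> J \<and> (\<forall>F. finite F \<longrightarrow> F0 \<subseteq> F \<longrightarrow> F \<subseteq> J \<longrightarrow> av (sum u F - L) < e)"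
    proof (intro exI conjI allI impI)
      show "finite (F0 \<inter> J)" "F0 \<inter> J \<subseteq> J" using F0 by auto
      fix F assume F: "finite F" "F0 \<inter> J \<subseteq> F" "F \<subseteq> J"
      have z: "\<forall>i\<in>F \<union> F0 - F. u i = 0" using F(2) F0(2) assms(2) by blast
      have "sum u (F \<union> F0) = sum u F"
        using F(1) F0(1) z by (intro sum.mono_neutral_right) auto
      moreover have "av (sum u (F \<union> F0) - L) < e" using F F0 assms(1) by (intro F0(3)) auto
      ultimately show "av (sum u F - L) < e" by simp
    qed
  qed
next
  assume h: "hs u J L"
  show "hs u I L" unfolding hs_def
  proof (intro allI impI)
    fix e :: real assume e: "e > 0"
    obtain F0 where F0: "finite F0" "F0 \<subseteq> J"
      "\<And>F. finite F \<Longrightarrow> F0 \<subseteq> F \<Longrightarrow> F \<subseteq> J \<Longrightarrow> av (sum u F - L) < e"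
      by (rule hsE[OF h e], blast)
    show "\<exists>F0. finite F0 \<and> F0 \<subseteq> I \<and> (\<forall>F. finite F \<longrightarrow> F0 \<subseteq> F \<longrightarrow> F \<subseteq> I \<longrightarrow> av (sum u F - L) < e)"
    proof (intro exI conjI allI impI)
      show "finite F0" "F0 \<subseteq> I" using F0 assms(1) by auto
      fix F assume F: "finite F" "F0 \<subseteq> F" "F \<subseteq> I"
      have z: "\<forall>i\<in>F - F \<inter> J. u i = 0" using F(3) assms(2) by blast
      have "sum u (F \<inter> J) = sum u F"
        using F(1) z by (intro sum.mono_neutral_left) auto
      then have "sum u F = sum u (F \<inter> J)" by simp
      moreover have "av (sum u (F \<inter> J) - L) < e" using F F0 by (intro F0(3)) auto
      ultimately show "av (sum u F - L) < e" by simp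
    qed
  qed
qed

lemma hs_single: "a \<in> I \<Longrightarrow> (\<And>i. i \<in> I \<Longrightarrow> i \<noteq> a \<Longrightarrow> u i = 0) \<Longrightarrow> hs u I (u a)"
  using hs_zero_outside[of "{a}" I u "u a"] hs_finite[of "{a}" u] by auto

lemma hs_reindex:
  assumes "bij_betw h J I" shows "hs (u \<circ> h) J L \<longleftrightarrow> hs u I L"
proof -
  have inj: "inj_on h J" and im: "h ` J = I" using assms by (auto simp: bij_betw_def)
  have sumeq: "sum (u \<circ> h) G = sum u (h ` G)" if "G \<subseteq> J" for G
    using sum.reindex[of h G u] inj that by (simp add: inj_on_subset)
  show ?thesis
  proof
    assume H: "hs (u \<circ> h) J L"
    show "hs u I L" unfolding hs_def
    proof (intro allI impI)
      fix e :: real assume e: "e > 0"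
      obtain F0 where F0: "finite F0" "F0 \<subseteq> J"
        "\<And>F. finite F \<Longrightarrow> F0 \<subseteq> F \<Longrightarrow> F \<subseteq> J \<Longrightarrow> av (sum (u \<circ> h) F - L) < e"
        by (rule hsE[OF H e], blast)
      show "\<exists>F0. finite F0 \<and> F0 \<subseteq> I \<and> (\<forall>F. finite F \<longrightarrow> F0 \<subseteq> F \<longrightarrow> F \<subseteq> I \<longrightarrow> av (sum u F - L) < e)"
      proof (intro exI conjI allI impI)
        show "finite (h ` F0)" "h ` F0 \<subseteq> I" using F0 im by auto
        fix F assume F: "finite F" "h ` F0 \<subseteq> F" "F \<subseteq> I"
        define G where "G = J \<inter> h -` F"
        have hG: "h ` G = F" using F im unfolding G_def by auto
        have "finite G" using finite_vimage_IntI[OF F(1) inj] unfolding G_def by (simp add: Int_commute)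
        moreover have "F0 \<subseteq> G" using F F0 unfolding G_def by auto
        moreover have "G \<subseteq> J" unfolding G_def by auto
        ultimately have "av (sum (u \<circ> h) G - L) < e" by (intro F0(3))
        then show "av (sum u F - L) < e" using sumeq[of G] hG \<open>G \<subseteq> J\<close> by simp
      qed
    qed
  next
    assume H: "hs u I L"
    show "hs (u \<circ> h) J L" unfolding hs_def
    proof (intro allI impI)
      fix e :: real assume e: "e > 0"
      obtain F0 where F0: "finite F0" "F0 \<subseteq> I"
        "\<And>F. finite F \<Longrightarrow> F0 \<subseteq> F \<Longrightarrow> F \<subseteq> I \<Longrightarrow> av (sum u F - L) < e"
        by (rule hsE[OF H e], blast)
      show "\<exists>F0. finite F0 \<and> F0 \<subseteq> J \<and> (\<forall>F. finite F \<longrightarrow> F0 \<subseteq> F \<longrightarrow> F \<subseteq> J \<longrightarrow> av (sum (u \<circ> h) F - L) < e)"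
      proof (intro exI conjI allI impI)
        show "finite (J \<inter> h -` F0)" using finite_vimage_IntI[OF F0(1) inj] by (simp add: Int_commute)
        show "J \<inter> h -` F0 \<subseteq> J" by auto
        fix F assume F: "finite F" "J \<inter> h -` F0 \<subseteq> F" "F \<subseteq> J"
        have "F0 \<subseteq> h ` F" using F(2) F0(2) im by blast
        moreover have "h ` F \<subseteq> I" using F im by auto
        ultimately have "av (sum u (h ` F) - L) < e" using F by (intro F0(3)) auto
        then show "av (sum (u \<circ> h) F - L) < e" using sumeq[of F] F by simp
      qed
    qed
  qed
qed

lemma hs_add: assumes "hs u I L" "hs v I M" shows "hs (\<lambda>i. u i + v i) I (L + M)"
  unfolding hs_def
proof (intro allI impI)
  fix e :: real assume e: "e > 0"
  obtain F1 where F1: "finite F1" "F1 \<subseteq> I"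
    "\<And>F. finite F \<Longrightarrow> F1 \<subseteq> F \<Longrightarrow> F \<subseteq> I \<Longrightarrow> av (sum u F - L) < e"
    by (rule hsE[OF assms(1) e], blast)
  obtain F2 where F2: "finite F2" "F2 \<subseteq> I"
    "\<And>F. finite F \<Longrightarrow> F2 \<subseteq> F \<Longrightarrow> F \<subseteq> I \<Longrightarrow> av (sum v F - M) < e"
    by (rule hsE[OF assms(2) e], blast)
  show "\<exists>F0. finite F0 \<and> F0 \<subseteq> I \<and> (\<forall>F. finite F \<longrightarrow> F0 \<subseteq> F \<longrightarrow> F \<subseteq> I \<longrightarrow> av ((\<Sum>i\<in>F. u i + v i) - (L + M)) < e)"
  proof (intro exI conjI allI impI)
    show "finite (F1 \<union> F2)" "F1 \<union> F2 \<subseteq> I" using F1 F2 by auto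
    fix F assume F: "finite F" "F1 \<union> F2 \<subseteq> F" "F \<subseteq> I"
    have eq: "(\<Sum>i\<in>F. u i + v i) - (L + M) = (sum u F - L) + (sum v F - M)"
      by (simp add: sum.distrib algebra_simps)
    have a: "av (sum u F - L) < e" using F F1 by (intro F1(3)) auto
    have b: "av (sum v F - M) < e" using F F2 by (intro F2(3)) auto
    show "av ((\<Sum>i\<in>F. u i + v i) - (L + M)) < e"
      unfolding eq using a b by (rule ultra_lt)
  qed
qed

lemma hs_cmult: assumes "hs u I L" shows "hs (\<lambda>i. c * u i) I (c * L)"
proof (cases "c = 0")
  case True
  then show ?thesis unfolding hs_def by (auto intro!: exI[of _ "{}"])
next
  case False
  then have ac: "av c > 0" using av_pos by simp
  show ?thesis unfolding hs_def
  proof (intro allI impI)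
    fix e :: real assume e: "e > 0"
    obtain F1 where F1: "finite F1" "F1 \<subseteq> I"
      "\<And>F. finite F \<Longrightarrow> F1 \<subseteq> F \<Longrightarrow> F \<subseteq> I \<Longrightarrow> av (sum u F - L) < e / av c"
      using hsE[OF assms divide_pos_pos[OF e ac]] by blast
    show "\<exists>F0. finite F0 \<and> F0 \<subseteq> I \<and> (\<forall>F. finite F \<longrightarrow> F0 \<subseteq> F \<longrightarrow> F \<subseteq> I \<longrightarrow> av ((\<Sum>i\<in>F. c * u i) - c * L) < e)"
    proof (intro exI conjI allI impI)
      show "finite F1" "F1 \<subseteq> I" using F1 by auto
      fix F assume F: "finite F" "F1 \<subseteq> F" "F \<subseteq> I"
      have "(\<Sum>i\<in>F. c * u i) - c * L = c * (sum u F - L)"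
        by (simp add: sum_distrib_left algebra_simps)
      moreover have "av (sum u F - L) * av c < e"
        using F1(3)[OF F] ac by (simp add: pos_less_divide_eq)
      ultimately show "av ((\<Sum>i\<in>F. c * u i) - c * L) < e" by (simp add: mult mult.commute)
    qed
  qed
qed

lemma hs_neg: assumes "hs u I L" shows "hs (\<lambda>i. - u i) I (- L)"
  using hs_cmult[OF assms, of "-1"] by simp

lemma hs_diff: assumes "hs u I L" "hs v I M" shows "hs (\<lambda>i. u i - v i) I (L - M)"
  using hs_add[OF assms(1) hs_neg[OF assms(2)]] by simp

lemma hs_bound:
  assumes "hs u I L" "\<And>i. i \<in> I \<Longrightarrow> av (u i) \<le> B" "0 \<le> B"
  shows "av L \<le> B"
proof (rule ccontr)
  assume c: "\<not> av L \<le> B"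
  then have e: "av L > 0" using assms(3) by simp
  obtain F0 where F0: "finite F0" "F0 \<subseteq> I"
    "\<And>F. finite F \<Longrightarrow> F0 \<subseteq> F \<Longrightarrow> F \<subseteq> I \<Longrightarrow> av (sum u F - L) < av L"
    by (rule hsE[OF assms(1) e], blast)
  have a: "av (sum u F0 - L) < av L" using F0 by auto
  have b: "av (sum u F0) \<le> B" using F0 assms by (intro av_sum_le) auto
  have "L = sum u F0 - (sum u F0 - L)" by simp
  then have "av L \<le> max (av (sum u F0)) (av (sum u F0 - L))"
    using ultra[of "sum u F0" "- (sum u F0 - L)"] by (simp add: av_sub_comm[of L])
  then show False using a b c by linarith
qed

lemma nul_bound_ex: assumes "nul u I" shows "\<exists>B>0. \<forall>i\<in>I. av (u i) \<le> B"
proof -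
  define S where "S = {i\<in>I. 1 \<le> av (u i)}"
  have fin: "finite S" using assms unfolding nul_def S_def by simp
  define B where "B = 1 + sum (\<lambda>i. av (u i)) S"
  have B0: "B > 0" unfolding B_def using nn by (simp add: add_pos_nonneg sum_nonneg)
  have "av (u i) \<le> B" if "i \<in> I" for i
  proof (cases "i \<in> S")
    case True
    then have "av (u i) \<le> sum (\<lambda>i. av (u i)) S" using fin by (intro member_le_sum) (auto simp: nn)
    then show ?thesis unfolding B_def by simp
  next
    case False
    then have "av (u i) < 1" using that unfolding S_def by auto
    then show ?thesis unfolding B_def using nn by (simp add: sum_nonneg add_increasing2 less_imp_le)
  qed
  then show ?thesis using B0 by blast
qed

lemma hs_bound_lt:
  assumes "nul u I" "hs u I L" "\<And>i. i \<in> I \<Longrightarrow> av (u i) < B" "0 < B"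
  shows "av L < B"
proof -
  define S where "S = {i\<in>I. B / 2 \<le> av (u i)}"
  have fin: "finite S" using assms(1)[unfolded nul_def, rule_format, of "B / 2"] assms(4) unfolding S_def by simp
  define B' where "B' = (if S = {} then B / 2 else max (B / 2) (Max ((\<lambda>i. av (u i)) ` S)))"
  have "B' < B"
  proof (cases "S = {}")
    case True then show ?thesis unfolding B'_def using assms(4) by simp
  next
    case False
    have "Max ((\<lambda>i. av (u i)) ` S) \<in> (\<lambda>i. av (u i)) ` S" using False fin by (intro Max_in) auto
    then have "Max ((\<lambda>i. av (u i)) ` S) < B" using assms(3) unfolding S_def by auto
    then show ?thesis unfolding B'_def using False assms(4) by simp
  qed
  moreover have "av L \<le> B'"
  proof (rule hs_bound[OF assms(2)])
    fix i assume i: "i \<in> I"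
    show "av (u i) \<le> B'"
    proof (cases "i \<in> S")
      case True
      then have "av (u i) \<le> Max ((\<lambda>i. av (u i)) ` S)" using fin by (intro Max_ge) auto
      then show ?thesis unfolding B'_def using True by auto
    next
      case False
      then show ?thesis unfolding B'_def S_def using i by auto
    qed
  next
    show "0 \<le> B'" unfolding B'_def using assms(4) by auto
  qed
  ultimately show ?thesis by simp
qed

lemma hs_Sigma:
  assumes "hs u (Sigma I J) L" "\<And>i. i \<in> I \<Longrightarrow> hs (\<lambda>j. u (i, j)) (J i) (M i)"
  shows "hs M I L"
  unfolding hs_def
proof (intro allI impI)
  fix e :: real assume e: "e > 0"
  obtain F0 where F0: "finite F0" "F0 \<subseteq> Sigma I J"
    "\<And>F. finite F \<Longrightarrow> F0 \<subseteq> F \<Longrightarrow> F \<subseteq> Sigma I J \<Longrightarrow> av (sum u F - L) < e"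
    by (rule hsE[OF assms(1) e], blast)
  define P where "P i H \<longleftrightarrow> finite H \<and> H \<subseteq> J i \<and> (\<forall>F. finite F \<longrightarrow> H \<subseteq> F \<longrightarrow> F \<subseteq> J i \<longrightarrow> av (sum (\<lambda>j. u (i, j)) F - M i) < e)" for i H
  have exH: "\<exists>H. P i H" if i: "i \<in> I" for i
  proof -
    obtain H0 where H0: "finite H0" "H0 \<subseteq> J i"
      "\<And>F. finite F \<Longrightarrow> H0 \<subseteq> F \<Longrightarrow> F \<subseteq> J i \<Longrightarrow> av (sum (\<lambda>j. u (i, j)) F - M i) < e"
      by (rule hsE[OF assms(2)[OF i] e], blast)
    have "P i H0" unfolding P_def using H0 by blast
    then show ?thesis ..
  qed
  define H where "H i = (SOME H. P i H)" for i
  have H: "finite (H i) \<and> H i \<subseteq> J i \<and> (\<forall>F. finite F \<longrightarrow> H i \<subseteq> F \<longrightarrow> F \<subseteq> J i \<longrightarrow> av (sum (\<lambda>j. u (i, j)) F - M i) < e)"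
    if "i \<in> I" for i
  proof -
    have "P i (H i)" unfolding H_def using exH[OF that] by (rule someI_ex)
    then show ?thesis unfolding P_def .
  qed
  show "\<exists>G0. finite G0 \<and> G0 \<subseteq> I \<and> (\<forall>G. finite G \<longrightarrow> G0 \<subseteq> G \<longrightarrow> G \<subseteq> I \<longrightarrow> av (sum M G - L) < e)"
  proof (intro exI conjI allI impI)
    show "finite (fst ` F0)" "fst ` F0 \<subseteq> I" using F0 by auto
    fix G assume G: "finite G" "fst ` F0 \<subseteq> G" "G \<subseteq> I"
    define H' where "H' i = H i \<union> {j. (i, j) \<in> F0}" for i
    have finH': "finite (H' i)" if "i \<in> I" for i
    proof -
      have "{j. (i, j) \<in> F0} \<subseteq> snd ` F0" by force
      then have "finite {j. (i, j) \<in> F0}" using F0(1) by (meson finite_imageI finite_subset)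
      moreover have "finite (H i)" using H[OF that] by blast
      ultimately show ?thesis unfolding H'_def by blast
    qed
    have subH': "H' i \<subseteq> J i" if "i \<in> I" for i
      unfolding H'_def using H[OF that] F0(2) by auto
    have inner: "av (sum (\<lambda>j. u (i, j)) (H' i) - M i) < e" if "i \<in> I" for i
    proof -
      have "\<forall>F. finite F \<longrightarrow> H i \<subseteq> F \<longrightarrow> F \<subseteq> J i \<longrightarrow> av (sum (\<lambda>j. u (i, j)) F - M i) < e"
        using H[OF that] by blast
      moreover have "H i \<subseteq> H' i" unfolding H'_def by blast
      ultimately show ?thesis using finH'[OF that] subH'[OF that] by blast
    qed
    define F where "F = Sigma G H'"
    have "finite F" unfolding F_def using G finH' by (intro finite_SigmaI) auto
    moreover have "F0 \<subseteq> F" unfolding F_def H'_def using G by force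
    moreover have "F \<subseteq> Sigma I J" unfolding F_def
    proof (rule subsetI)
      fix x assume "x \<in> Sigma G H'"
      then obtain a b where x: "x = (a, b)" "a \<in> G" "b \<in> H' a" by blast
      then have "a \<in> I" using G(3) by blast
      then show "x \<in> Sigma I J" using x subH' by blast
    qed
    ultimately have a: "av (sum u F - L) < e" by (rule F0(3))
    have sF: "sum u F = (\<Sum>i\<in>G. sum (\<lambda>j. u (i, j)) (H' i))"
      unfolding F_def using G finH' by (subst sum.Sigma) auto
    have b: "av (\<Sum>i\<in>G. M i - sum (\<lambda>j. u (i, j)) (H' i)) < e"
      using G inner e by (intro av_sum_lt) (auto simp: av_sub_comm)
    have "sum M G - L = (\<Sum>i\<in>G. M i - sum (\<lambda>j. u (i, j)) (H' i)) + (sum u F - L)"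
      by (simp add: sF sum_subtractf)
    then show "av (sum M G - L) < e" using ultra_lt[OF b a] by (simp add: add_diff_eq)
  qed
qed

lemma nul_slice: assumes "nul u (Sigma I J)" "i \<in> I" shows "nul (\<lambda>j. u (i, j)) (J i)"
  unfolding nul_def
proof (intro allI impI)
  fix e :: real assume e: "e > 0"
  have "{j \<in> J i. e \<le> av (u (i, j))} \<subseteq> snd ` {x \<in> Sigma I J. e \<le> av (u x)}"
    using assms(2) by (auto intro!: image_eqI[where x="(i, _)"])
  then show "finite {j \<in> J i. e \<le> av (u (i, j))}"
    using assms(1) e unfolding nul_def by (meson finite_imageI finite_subset)
qed

lemma nul_prod:
  assumes "nul u I" "nul v J" shows "nul (\<lambda>(i, j). u i * v j) (I \<times> J)"
proof -
  obtain Bu where Bu: "Bu > 0" "\<And>i. i \<in> I \<Longrightarrow> av (u i) \<le> Bu" using nul_bound_ex[OF assms(1)] by blast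
  obtain Bv where Bv: "Bv > 0" "\<And>j. j \<in> J \<Longrightarrow> av (v j) \<le> Bv" using nul_bound_ex[OF assms(2)] by blast
  have "finite {x \<in> I \<times> J. e \<le> av (u (fst x) * v (snd x))}" if e: "e > 0" for e
  proof -
    have "{x \<in> I \<times> J. e \<le> av (u (fst x) * v (snd x))} \<subseteq>
          {i\<in>I. e / Bv \<le> av (u i)} \<times> {j\<in>J. e / Bu \<le> av (v j)}"
    proof safe
      fix i j assume ij: "i \<in> I" "j \<in> J" and le: "e \<le> av (u (fst (i, j)) * v (snd (i, j)))"
      then have le': "e \<le> av (u i) * av (v j)" by (simp add: mult)
      have "av (u i) * av (v j) \<le> av (u i) * Bv" using Bv ij nn by (simp add: mult_left_mono)
      then show "e / Bv \<le> av (u i)" using le' Bv by (simp add: divide_le_eq mult.commute)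
      have "av (u i) * av (v j) \<le> Bu * av (v j)" using Bu ij nn by (simp add: mult_right_mono)
      then show "e / Bu \<le> av (v j)" using le' Bu by (simp add: divide_le_eq mult.commute)
    qed
    moreover have "finite ({i\<in>I. e / Bv \<le> av (u i)} \<times> {j\<in>J. e / Bu \<le> av (v j)})"
      using assms e Bu Bv unfolding nul_def by simp
    ultimately show ?thesis by (rule finite_subset)
  qed
  then show ?thesis unfolding nul_def by (simp add: case_prod_beta)
qed

lemma hs_prod:
  assumes "nul u I" "nul v J" "hs u I L" "hs v J M"
  shows "hs (\<lambda>(i, j). u i * v j) (I \<times> J) (L * M)"
proof -
  obtain P where P: "hs (\<lambda>(i, j). u i * v j) (I \<times> J) P"
    using nul_hs_ex[OF nul_prod[OF assms(1,2)]] by blast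
  have "hs (\<lambda>i. u i * M) I P"
    using hs_Sigma[OF P, of "\<lambda>i. u i * M"] hs_cmult[OF assms(4)] by simp
  moreover have "hs (\<lambda>i. u i * M) I (L * M)"
    using hs_cmult[OF assms(3), of M] by (simp add: mult.commute)
  ultimately have "P = L * M" by (rule hs_unique)
  then show ?thesis using P by simp
qed

end


definition mon :: "nat \<Rightarrow> (nat \<Rightarrow> 'k::comm_ring_1) \<Rightarrow> (nat \<Rightarrow> nat) \<Rightarrow> 'k" where
  "mon m x \<alpha> = (\<Prod>i<m. x i ^ \<alpha> i)"

definition pd :: "nat \<Rightarrow> nat \<Rightarrow> (nat \<Rightarrow> nat) set" where
  "pd m d = {\<alpha>\<in>multi m. mdeg m \<alpha> \<le> d}"

lemma mdeg_ge: "i < m \<Longrightarrow> \<alpha> i \<le> mdeg m \<alpha>"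
  unfolding mdeg_def by (rule member_le_sum) auto

lemma finite_pd: "finite (pd m d)"
proof -
  have inj: "inj_on (\<lambda>\<alpha>. map \<alpha> [0..<m]) (pd m d)"
  proof (rule inj_onI)
    fix \<alpha> \<beta> assume a: "\<alpha> \<in> pd m d" "\<beta> \<in> pd m d" "map \<alpha> [0..<m] = map \<beta> [0..<m]"
    show "\<alpha> = \<beta>"
    proof
      fix i show "\<alpha> i = \<beta> i"
      proof (cases "i < m")
        case True
        then show ?thesis using arg_cong[OF a(3), of "\<lambda>xs. xs ! i"] by simp
      next
        case False
        then show ?thesis using a(1,2) unfolding pd_def multi_def by simp
      qed
    qed
  qed
  have "(\<lambda>\<alpha>. map \<alpha> [0..<m]) ` pd m d \<subseteq> {xs. set xs \<subseteq> {..d} \<and> length xs = m}"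
  proof
    fix xs assume "xs \<in> (\<lambda>\<alpha>. map \<alpha> [0..<m]) ` pd m d"
    then obtain \<alpha> where a: "\<alpha> \<in> pd m d" "xs = map \<alpha> [0..<m]" by blast
    have "\<alpha> i \<le> d" if "i < m" for i using mdeg_ge[OF that, of \<alpha>] a(1) unfolding pd_def by simp
    then show "xs \<in> {xs. set xs \<subseteq> {..d} \<and> length xs = m}" using a(2) by auto
  qed
  moreover have "finite {xs. set xs \<subseteq> {..d} \<and> length xs = m}"
    by (rule finite_lists_length_eq) simp
  ultimately have "finite ((\<lambda>\<alpha>. map \<alpha> [0..<m]) ` pd m d)" by (rule finite_subset)
  then show ?thesis using inj by (rule finite_imageD)
qed

lemma pd_mono: "mono (pd m)"
  unfolding mono_def pd_def by auto

lemma pd_sub: "pd m d \<subseteq> multi m"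
  unfolding pd_def by auto

lemma pd_ex: "\<alpha> \<in> multi m \<Longrightarrow> \<exists>d. \<alpha> \<in> pd m d"
  unfolding pd_def by auto

lemma le_set_sub: assumes "\<beta> \<in> multi n" shows "{\<alpha>. \<forall>i. \<alpha> i \<le> \<beta> i} \<subseteq> pd n (mdeg n \<beta>)"
proof
  fix \<alpha> assume "\<alpha> \<in> {\<alpha>. \<forall>i. \<alpha> i \<le> \<beta> i}"
  then have le: "\<And>i. \<alpha> i \<le> \<beta> i" by auto
  have "\<alpha> i = 0" if "i \<ge> n" for i
  proof -
    have "\<beta> i = 0" using assms that unfolding multi_def by simp
    then show ?thesis using le[of i] by simp
  qed
  then have "\<alpha> \<in> multi n" unfolding multi_def by simp
  moreover have "mdeg n \<alpha> \<le> mdeg n \<beta>" unfolding mdeg_def using le by (intro sum_mono) auto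
  ultimately show "\<alpha> \<in> pd n (mdeg n \<beta>)" unfolding pd_def by auto
qed

lemma finite_le_set: "\<beta> \<in> multi n \<Longrightarrow> finite {\<alpha>. \<forall>i. \<alpha> i \<le> \<beta> i}"
  using le_set_sub finite_pd by (meson finite_subset)

lemma le_set_multi: "\<beta> \<in> multi n \<Longrightarrow> \<alpha> \<in> {\<alpha>. \<forall>i. \<alpha> i \<le> \<beta> i} \<Longrightarrow> \<alpha> \<in> multi n"
  using le_set_sub pd_sub by blast

lemma mon_add: "mon m x (\<lambda>i. \<alpha> i + \<gamma> i) = mon m x \<alpha> * mon m x \<gamma>"
  unfolding mon_def by (simp add: power_add prod.distrib)

lemma zero_set: "{\<alpha>::nat\<Rightarrow>nat. \<forall>i. \<alpha> i \<le> 0} = {\<lambda>_. 0}"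
  by (auto simp: fun_eq_iff)

lemma ser_mult_0: "ser_mult f g (\<lambda>_. 0) = f (\<lambda>_. 0) * g (\<lambda>_. 0)"
proof -
  have "{\<alpha>::nat\<Rightarrow>nat. \<forall>i. \<alpha> i \<le> (\<lambda>_. 0::nat) i} = {\<lambda>_. 0}" by (auto simp: fun_eq_iff)
  then show ?thesis unfolding ser_mult_def by simp
qed

lemma ser_pow_0: "ser_pow f 0 = ser_one" by (simp add: ser_pow_def)
lemma ser_pow_Suc: "ser_pow f (Suc k) = ser_mult f (ser_pow f k)" by (simp add: ser_pow_def)

lemma ser_pow_const_0: "ser_pow (ser_const c) k (\<lambda>_. 0) = c ^ k"
  by (induction k) (simp_all add: ser_pow_0 ser_pow_Suc ser_mult_0 ser_one_def ser_const_def)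

lemma prodp_const_0: "ser_prodp (\<lambda>i. ser_const (x i)) \<alpha> j (\<lambda>_. 0) = (\<Prod>i<j. x i ^ \<alpha> i)"
  by (induction j) (simp_all add: ser_mult_0 ser_one_def ser_pow_const_0)

lemma ser_eval_pd:
  "ser_eval av m f x = av_lim av (\<lambda>d. \<Sum>\<alpha>\<in>pd m d. f \<alpha> * mon m x \<alpha>)"
  unfolding ser_eval_def ser_subst_def pd_def mon_def prodp_const_0 by simp

lemma ser_subst_pd:
  "ser_subst av m f h \<beta> = av_lim av (\<lambda>d. \<Sum>\<alpha>\<in>pd m d. f \<alpha> * ser_prodp h \<alpha> m \<beta>)"
  unfolding ser_subst_def pd_def by simp

lemma mon_cong: "(\<And>i. i < m \<Longrightarrow> x i = y i) \<Longrightarrow> mon m x \<alpha> = mon m y \<alpha>"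
  unfolding mon_def by (rule prod.cong) auto

lemma ser_eval_cong: "(\<And>i. i < m \<Longrightarrow> x i = y i) \<Longrightarrow> ser_eval av m f x = ser_eval av m f y"
  unfolding ser_eval_pd using mon_cong[of m x y] by simp

context nav
begin

lemma av_mon_le1: "(\<And>i. i < m \<Longrightarrow> av (x i) \<le> 1) \<Longrightarrow> av (mon m x \<alpha>) \<le> 1"
  unfolding mon_def by (rule av_prod_le1) (auto intro: av_power_le1)

lemma lim_pd: assumes "nul g (multi m)" shows "hs g (multi m) (av_lim av (\<lambda>d. \<Sum>\<alpha>\<in>pd m d. g \<alpha>))"
proof -
  obtain L where L: "hs g (multi m) L" using nul_hs_ex[OF assms] by blast
  have "(\<lambda>d. av (sum g (pd m d) - L)) \<longlonglongrightarrow> 0"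
    using L finite_pd pd_sub pd_mono pd_ex by (rule hs_exhaust)
  then have "av_lim av (\<lambda>d. sum g (pd m d)) = L" by (rule av_lim_eq)
  then show ?thesis using L by simp
qed

lemma nul_mono: assumes "nul g I" "\<And>i. i \<in> I \<Longrightarrow> av (f i) \<le> av (g i)" shows "nul f I"
  unfolding nul_def
proof (intro allI impI)
  fix e :: real assume e: "e > 0"
  have "{i\<in>I. e \<le> av (f i)} \<subseteq> {i\<in>I. e \<le> av (g i)}" using assms(2) by force
  then show "finite {i\<in>I. e \<le> av (f i)}" using assms(1) e unfolding nul_def by (meson finite_subset)
qed

lemma tate_nul: "tate av m f \<Longrightarrow> nul f I"
  unfolding tate_def nul_def by (metis (no_types, lifting) finite_subset mem_Collect_eq subsetI)

lemma tate_le1: "tate av m f \<Longrightarrow> av (f \<alpha>) \<le> 1"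
  unfolding tate_def by blast

lemma tate_supp: "tate av m f \<Longrightarrow> \<alpha> \<notin> multi m \<Longrightarrow> f \<alpha> = 0"
  unfolding tate_def by blast

lemma tateI:
  assumes "\<And>\<alpha>. \<alpha> \<notin> multi m \<Longrightarrow> f \<alpha> = 0" "\<And>\<alpha>. av (f \<alpha>) \<le> 1"
    "\<And>e. e > 0 \<Longrightarrow> finite {\<alpha>. e \<le> av (f \<alpha>)}"
  shows "tate av m f"
  unfolding tate_def using assms by blast

lemma ev_hs:
  assumes "tate av m f" "\<And>i. i < m \<Longrightarrow> av (x i) \<le> 1"
  shows "hs (\<lambda>\<alpha>. f \<alpha> * mon m x \<alpha>) (multi m) (ser_eval av m f x)"
proof -
  have "nul (\<lambda>\<alpha>. f \<alpha> * mon m x \<alpha>) (multi m)"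
  proof (rule nul_mono[OF tate_nul[OF assms(1)]])
    fix \<alpha> show "av (f \<alpha> * mon m x \<alpha>) \<le> av (f \<alpha>)"
      using av_mon_le1[OF assms(2)] nn by (simp add: mult mult_left_le)
  qed
  then show ?thesis unfolding ser_eval_pd by (rule lim_pd)
qed

lemma ev_eq:
  assumes "tate av m f" "\<And>i. i < m \<Longrightarrow> av (x i) \<le> 1"
    "hs (\<lambda>\<alpha>. f \<alpha> * mon m x \<alpha>) (multi m) L"
  shows "ser_eval av m f x = L"
  using hs_unique[OF ev_hs[OF assms(1,2)] assms(3)] .

lemma ev_le1:
  assumes "tate av m f" "\<And>i. i < m \<Longrightarrow> av (x i) \<le> 1"
  shows "av (ser_eval av m f x) \<le> 1"
proof -
  have "av (f \<alpha> * mon m x \<alpha>) \<le> 1" for \<alpha>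
    using av_mon_le1[OF assms(2)] tate_le1[OF assms(1)] by (simp add: av_mult_le1)
  then show ?thesis using hs_bound[OF ev_hs[OF assms], where B=1] by simp
qed

lemma zero_multi: "(\<lambda>_. 0) \<in> multi m" unfolding multi_def by simp

lemma tate_one: "tate av n ser_one"
proof (rule tateI)
  fix \<alpha> :: "nat \<Rightarrow> nat" assume "\<alpha> \<notin> multi n"
  then show "ser_one \<alpha> = (0::'k)" unfolding ser_one_def using zero_multi by auto
next
  fix \<alpha> :: "nat \<Rightarrow> nat" show "av (ser_one \<alpha>) \<le> 1" unfolding ser_one_def by simp
next
  fix e :: real assume "e > 0"
  then have "{\<alpha>. e \<le> av (ser_one \<alpha>)} \<subseteq> {\<lambda>_. 0}" unfolding ser_one_def by auto
  then show "finite {\<alpha>. e \<le> av (ser_one \<alpha>)}" by (rule finite_subset) simp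
qed

lemma tate_const: assumes "av c \<le> 1" shows "tate av n (ser_const c)"
proof (rule tateI)
  fix \<alpha> :: "nat \<Rightarrow> nat" assume "\<alpha> \<notin> multi n"
  then show "ser_const c \<alpha> = 0" unfolding ser_const_def using zero_multi by auto
next
  fix \<alpha> :: "nat \<Rightarrow> nat" show "av (ser_const c \<alpha>) \<le> 1" unfolding ser_const_def using assms by simp
next
  fix e :: real assume "e > 0"
  then have "{\<alpha>. e \<le> av (ser_const c \<alpha>)} \<subseteq> {\<lambda>_. 0}" unfolding ser_const_def by auto
  then show "finite {\<alpha>. e \<le> av (ser_const c \<alpha>)}" by (rule finite_subset) simp
qed

lemma tate_var: assumes "i < n" shows "tate av n (ser_var i)"
proof (rule tateI)
  fix \<alpha> :: "nat \<Rightarrow> nat" assume "\<alpha> \<notin> multi n"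
  moreover have "(\<lambda>j. if j = i then 1 else 0) \<in> multi n" using assms unfolding multi_def by auto
  ultimately show "ser_var i \<alpha> = 0" unfolding ser_var_def by auto
next
  fix \<alpha> :: "nat \<Rightarrow> nat" show "av (ser_var i \<alpha>) \<le> 1" unfolding ser_var_def by simp
next
  fix e :: real assume "e > 0"
  then have "{\<alpha>. e \<le> av (ser_var i \<alpha>)} \<subseteq> {\<lambda>j. if j = i then 1 else 0}" unfolding ser_var_def by auto
  then show "finite {\<alpha>. e \<le> av (ser_var i \<alpha>)}" by (rule finite_subset) simp
qed

lemma tate_mult: assumes u: "tate av n u" and v: "tate av n v" shows "tate av n (ser_mult u v)"
proof (rule tateI)
  fix \<beta> :: "nat \<Rightarrow> nat" assume b: "\<beta> \<notin> multi n"
  then obtain i where i: "i \<ge> n" "\<beta> i \<noteq> 0" unfolding multi_def by auto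
  have "u \<alpha> * v (\<lambda>i. \<beta> i - \<alpha> i) = 0" if "\<alpha> \<in> {\<alpha>. \<forall>i. \<alpha> i \<le> \<beta> i}" for \<alpha>
  proof (cases "\<alpha> i = 0")
    case True
    then have "(\<lambda>i. \<beta> i - \<alpha> i) \<notin> multi n" using i unfolding multi_def by auto
    then show ?thesis using tate_supp[OF v] by simp
  next
    case False
    then have "\<alpha> \<notin> multi n" using i unfolding multi_def by auto
    then show ?thesis using tate_supp[OF u] by simp
  qed
  then show "ser_mult u v \<beta> = 0" unfolding ser_mult_def by (intro sum.neutral) blast
next
  fix \<beta> :: "nat \<Rightarrow> nat"
  show "av (ser_mult u v \<beta>) \<le> 1" unfolding ser_mult_def
    by (rule av_sum_le) (auto intro!: av_mult_le1 tate_le1[OF u] tate_le1[OF v])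
next
  fix e :: real assume e: "e > 0"
  have "{\<beta>. e \<le> av (ser_mult u v \<beta>)} \<subseteq>
        (\<lambda>(\<alpha>, \<gamma>). \<lambda>i. \<alpha> i + \<gamma> i) ` ({\<alpha>. e \<le> av (u \<alpha>)} \<times> {\<gamma>. e \<le> av (v \<gamma>)})"
  proof
    fix \<beta> assume "\<beta> \<in> {\<beta>. e \<le> av (ser_mult u v \<beta>)}"
    then have eb: "e \<le> av (ser_mult u v \<beta>)" by simp
    have "\<exists>\<alpha>\<in>{\<alpha>. \<forall>i. \<alpha> i \<le> \<beta> i}. e \<le> av (u \<alpha> * v (\<lambda>i. \<beta> i - \<alpha> i))"
    proof (rule ccontr)
      assume "\<not> ?thesis"
      then have "av (ser_mult u v \<beta>) < e" unfolding ser_mult_def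
        by (intro av_sum_lt e) auto
      then show False using eb by simp
    qed
    then obtain \<alpha> where a: "\<forall>i. \<alpha> i \<le> \<beta> i" and ea: "e \<le> av (u \<alpha>) * av (v (\<lambda>i. \<beta> i - \<alpha> i))"
      by (auto simp: mult)
    have "av (u \<alpha>) * av (v (\<lambda>i. \<beta> i - \<alpha> i)) \<le> av (u \<alpha>)"
      using tate_le1[OF v] nn by (simp add: mult_left_le)
    moreover have "av (u \<alpha>) * av (v (\<lambda>i. \<beta> i - \<alpha> i)) \<le> av (v (\<lambda>i. \<beta> i - \<alpha> i))"
      using tate_le1[OF u] nn by (simp add: mult_left_le_one_le)
    moreover have "\<beta> = (\<lambda>i. \<alpha> i + (\<beta> i - \<alpha> i))" using a by (auto simp: fun_eq_iff)
    ultimately show "\<beta> \<in> (\<lambda>(\<alpha>, \<gamma>). \<lambda>i. \<alpha> i + \<gamma> i) ` ({\<alpha>. e \<le> av (u \<alpha>)} \<times> {\<gamma>. e \<le> av (v \<gamma>)})"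
      using ea by (intro image_eqI[where x="(\<alpha>, \<lambda>i. \<beta> i - \<alpha> i)"]) auto
  qed
  moreover have "finite ({\<alpha>. e \<le> av (u \<alpha>)} \<times> {\<gamma>. e \<le> av (v \<gamma>)})"
    using u v e unfolding tate_def by blast
  ultimately show "finite {\<beta>. e \<le> av (ser_mult u v \<beta>)}"
    by (meson finite_imageI finite_subset)
qed

lemma tate_pow: "tate av n u \<Longrightarrow> tate av n (ser_pow u k)"
  by (induction k) (simp_all add: ser_pow_0 ser_pow_Suc tate_one tate_mult)

lemma tate_prodp: "(\<And>i. i < j \<Longrightarrow> tate av n (h i)) \<Longrightarrow> tate av n (ser_prodp h \<alpha> j)"
  by (induction j) (simp_all add: tate_one tate_mult tate_pow)

end


context nav
begin

lemma hs_zero: "hs (\<lambda>_. 0) I 0"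
  unfolding hs_def by (auto intro!: exI[of _ "{}"])

lemma mon_zero: "mon m x (\<lambda>_. 0) = 1" unfolding mon_def by simp

lemma ev_one: assumes "\<And>i. i < n \<Longrightarrow> av (x i) \<le> 1" shows "ser_eval av n ser_one x = 1"
proof (rule ev_eq[OF tate_one assms])
  have "hs (\<lambda>\<alpha>. ser_one \<alpha> * mon n x \<alpha>) (multi n) (ser_one (\<lambda>_. 0) * mon n x (\<lambda>_. 0))"
    by (rule hs_single[OF zero_multi]) (simp add: ser_one_def)
  then show "hs (\<lambda>\<alpha>. ser_one \<alpha> * mon n x \<alpha>) (multi n) 1" by (simp add: ser_one_def mon_zero)
qed

lemma ev_const: assumes "\<And>i. i < n \<Longrightarrow> av (x i) \<le> 1" "av c \<le> 1"
  shows "ser_eval av n (ser_const c) x = c"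
proof (rule ev_eq[OF tate_const[OF assms(2)] assms(1)])
  have "hs (\<lambda>\<alpha>. ser_const c \<alpha> * mon n x \<alpha>) (multi n) (ser_const c (\<lambda>_. 0) * mon n x (\<lambda>_. 0))"
    by (rule hs_single[OF zero_multi]) (simp add: ser_const_def)
  then show "hs (\<lambda>\<alpha>. ser_const c \<alpha> * mon n x \<alpha>) (multi n) c" by (simp add: ser_const_def mon_zero)
qed

lemma ev_var: assumes "\<And>i. i < n \<Longrightarrow> av (x i) \<le> 1" "i < n"
  shows "ser_eval av n (ser_var i) x = x i"
proof (rule ev_eq[OF tate_var[OF assms(2)] assms(1)])
  define d where "d = (\<lambda>j::nat. if j = i then 1 else (0::nat))"
  have dm: "d \<in> multi n" using assms(2) unfolding d_def multi_def by auto
  have "hs (\<lambda>\<alpha>. ser_var i \<alpha> * mon n x \<alpha>) (multi n) (ser_var i d * mon n x d)"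
    by (rule hs_single[OF dm]) (simp add: ser_var_def d_def)
  moreover have "mon n x d = x i"
  proof -
    have "mon n x d = (\<Prod>j<n. if j = i then x j else 1)"
      unfolding mon_def d_def by (rule prod.cong) auto
    also have "\<dots> = x i" using assms(2) by (simp add: prod.delta)
    finally show ?thesis .
  qed
  ultimately show "hs (\<lambda>\<alpha>. ser_var i \<alpha> * mon n x \<alpha>) (multi n) (x i)"
    by (simp add: ser_var_def d_def)
qed

lemma ev_mult:
  assumes u: "tate av n u" and v: "tate av n v" and x: "\<And>i. i < n \<Longrightarrow> av (x i) \<le> 1"
  shows "ser_eval av n (ser_mult u v) x = ser_eval av n u x * ser_eval av n v x"
proof -
  define U where "U = ser_eval av n u x"
  define V where "V = ser_eval av n v x"
  define Sig where "Sig = Sigma (multi n) (\<lambda>\<beta>. {\<alpha>. \<forall>i. \<alpha> i \<le> \<beta> i})"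
  define \<phi> where "\<phi> = (\<lambda>(\<alpha>::nat\<Rightarrow>nat, \<gamma>::nat\<Rightarrow>nat). ((\<lambda>i. \<alpha> i + \<gamma> i), \<alpha>))"
  define w where "w = (\<lambda>(\<beta>, \<alpha>). u \<alpha> * v (\<lambda>i. \<beta> i - \<alpha> i) * mon n x \<beta>)"
  have bij: "bij_betw \<phi> (multi n \<times> multi n) Sig"
    unfolding bij_betw_def
  proof
    show "inj_on \<phi> (multi n \<times> multi n)"
    proof (rule inj_onI)
      fix p q assume "p \<in> multi n \<times> multi n" "q \<in> multi n \<times> multi n" "\<phi> p = \<phi> q"
      then show "p = q" unfolding \<phi>_def by (auto simp: fun_eq_iff split: prod.splits)
    qed
    show "\<phi> ` (multi n \<times> multi n) = Sig"
    proof
      show "\<phi> ` (multi n \<times> multi n) \<subseteq> Sig"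
        unfolding \<phi>_def Sig_def multi_def by auto
      show "Sig \<subseteq> \<phi> ` (multi n \<times> multi n)"
      proof
        fix p assume "p \<in> Sig"
        then obtain \<beta> \<alpha> where p: "p = (\<beta>, \<alpha>)" "\<beta> \<in> multi n" "\<forall>i. \<alpha> i \<le> \<beta> i"
          unfolding Sig_def by blast
        have am: "\<alpha> \<in> multi n" using le_set_multi[OF p(2)] p(3) by blast
        have gm: "(\<lambda>i. \<beta> i - \<alpha> i) \<in> multi n" using p(2) unfolding multi_def by auto
        have "\<phi> (\<alpha>, \<lambda>i. \<beta> i - \<alpha> i) = p" unfolding \<phi>_def p(1) using p(3) by (auto simp: fun_eq_iff)
        then show "p \<in> \<phi> ` (multi n \<times> multi n)" using am gm by force
      qed
    qed
  qed
  have nu: "nul (\<lambda>\<alpha>. u \<alpha> * mon n x \<alpha>) (multi n)"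
    by (rule nul_mono[OF tate_nul[OF u]]) (simp add: mult mult_left_le av_mon_le1[OF x] nn)
  have nv: "nul (\<lambda>\<alpha>. v \<alpha> * mon n x \<alpha>) (multi n)"
    by (rule nul_mono[OF tate_nul[OF v]]) (simp add: mult mult_left_le av_mon_le1[OF x] nn)
  have "hs (\<lambda>(\<alpha>, \<gamma>). (u \<alpha> * mon n x \<alpha>) * (v \<gamma> * mon n x \<gamma>)) (multi n \<times> multi n) (U * V)"
    using hs_prod[OF nu nv ev_hs[OF u x] ev_hs[OF v x]] unfolding U_def V_def .
  moreover have "w \<circ> \<phi> = (\<lambda>(\<alpha>, \<gamma>). (u \<alpha> * mon n x \<alpha>) * (v \<gamma> * mon n x \<gamma>))"
    unfolding w_def \<phi>_def by (rule ext) (auto simp: mon_add split: prod.splits)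
  ultimately have "hs (w \<circ> \<phi>) (multi n \<times> multi n) (U * V)" by simp
  then have hw: "hs w Sig (U * V)" using hs_reindex[OF bij] by blast
  have hsM: "hs (\<lambda>\<beta>. ser_mult u v \<beta> * mon n x \<beta>) (multi n) (U * V)"
  proof (rule hs_Sigma[OF hw[unfolded Sig_def]])
    fix \<beta> assume b: "\<beta> \<in> multi n"
    have "hs (\<lambda>\<alpha>. w (\<beta>, \<alpha>)) {\<alpha>. \<forall>i. \<alpha> i \<le> \<beta> i} (sum (\<lambda>\<alpha>. w (\<beta>, \<alpha>)) {\<alpha>. \<forall>i. \<alpha> i \<le> \<beta> i})"
      by (rule hs_finite[OF finite_le_set[OF b]])
    moreover have "sum (\<lambda>\<alpha>. w (\<beta>, \<alpha>)) {\<alpha>. \<forall>i. \<alpha> i \<le> \<beta> i} = ser_mult u v \<beta> * mon n x \<beta>"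
      unfolding w_def ser_mult_def by (simp add: sum_distrib_right)
    ultimately show "hs (\<lambda>\<alpha>. w (\<beta>, \<alpha>)) {\<alpha>. \<forall>i. \<alpha> i \<le> \<beta> i} (ser_mult u v \<beta> * mon n x \<beta>)" by simp
  qed
  show ?thesis unfolding U_def[symmetric] V_def[symmetric]
    by (rule ev_eq[of n "ser_mult u v" x, OF tate_mult[OF u v] x hsM])
qed

lemma ev_pow:
  assumes u: "tate av n u" and x: "\<And>i. i < n \<Longrightarrow> av (x i) \<le> 1"
  shows "ser_eval av n (ser_pow u k) x = ser_eval av n u x ^ k"
  by (induction k) (simp_all add: ser_pow_0 ser_pow_Suc ev_one[OF x] ev_mult[OF u tate_pow[OF u] x])

lemma ev_prodp:
  assumes h: "\<And>i. i < j \<Longrightarrow> tate av n (h i)" and x: "\<And>i. i < n \<Longrightarrow> av (x i) \<le> 1"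
  shows "ser_eval av n (ser_prodp h \<alpha> j) x = (\<Prod>i<j. ser_eval av n (h i) x ^ \<alpha> i)"
  using h
proof (induction j)
  case 0 then show ?case by (simp add: ev_one[OF x])
next
  case (Suc j)
  have hj: "tate av n (h j)" using Suc.prems by simp
  have hp: "tate av n (ser_prodp h \<alpha> j)" using Suc.prems by (intro tate_prodp) simp
  show ?case using Suc
    by (simp add: ev_mult[OF hp tate_pow[OF hj] x] ev_pow[OF hj x])
qed

lemma subst_hs:
  assumes f: "tate av m f" and h: "\<And>j. j < m \<Longrightarrow> tate av n (h j)"
  shows "hs (\<lambda>\<alpha>. f \<alpha> * ser_prodp h \<alpha> m \<beta>) (multi m) (ser_subst av m f h \<beta>)"
proof -
  have "nul (\<lambda>\<alpha>. f \<alpha> * ser_prodp h \<alpha> m \<beta>) (multi m)"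
  proof (rule nul_mono[OF tate_nul[OF f]])
    fix \<alpha> show "av (f \<alpha> * ser_prodp h \<alpha> m \<beta>) \<le> av (f \<alpha>)"
      using tate_le1[OF tate_prodp[OF h]] nn by (simp add: mult mult_left_le)
  qed
  then show ?thesis unfolding ser_subst_pd by (rule lim_pd)
qed

lemma tate_subst:
  assumes f: "tate av m f" and h: "\<And>j. j < m \<Longrightarrow> tate av n (h j)"
  shows "tate av n (ser_subst av m f h)"
proof (rule tateI)
  fix \<beta> :: "nat \<Rightarrow> nat" assume b: "\<beta> \<notin> multi n"
  have hs0: "hs (\<lambda>\<alpha>. f \<alpha> * ser_prodp h \<alpha> m \<beta>) (multi m) 0"
    using hs_zero hs_cong tate_supp[OF tate_prodp[OF h] b] by simp
  show "ser_subst av m f h \<beta> = 0" by (rule hs_unique[OF subst_hs[of m f n h \<beta>, OF f h] hs0])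
next
  fix \<beta> :: "nat \<Rightarrow> nat"
  have "av (f \<alpha> * ser_prodp h \<alpha> m \<beta>) \<le> 1" for \<alpha>
    using tate_le1[OF tate_prodp[OF h]] tate_le1[OF f] by (simp add: av_mult_le1)
  then show "av (ser_subst av m f h \<beta>) \<le> 1" using hs_bound[OF subst_hs[OF f h], where B=1] by simp
next
  fix e :: real assume e: "e > 0"
  define A where "A = {\<alpha>. e \<le> av (f \<alpha>)}"
  have finA: "finite A" using f e unfolding tate_def A_def by blast
  have "{\<beta>. e \<le> av (ser_subst av m f h \<beta>)} \<subseteq> (\<Union>\<alpha>\<in>A. {\<beta>. e \<le> av (ser_prodp h \<alpha> m \<beta>)})"
  proof
    fix \<beta> assume "\<beta> \<in> {\<beta>. e \<le> av (ser_subst av m f h \<beta>)}"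
    then have eb: "e \<le> av (ser_subst av m f h \<beta>)" by simp
    have "\<exists>\<alpha>\<in>multi m. e \<le> av (f \<alpha> * ser_prodp h \<alpha> m \<beta>)"
    proof (rule ccontr)
      assume "\<not> ?thesis"
      then have lt: "\<And>\<alpha>. \<alpha> \<in> multi m \<Longrightarrow> av (f \<alpha> * ser_prodp h \<alpha> m \<beta>) < e" by force
      have "nul (\<lambda>\<alpha>. f \<alpha> * ser_prodp h \<alpha> m \<beta>) (multi m)"
        by (rule nul_mono[OF tate_nul[OF f]])
           (use tate_le1[OF tate_prodp[OF h]] nn in \<open>simp add: mult mult_left_le\<close>)
      then have "av (ser_subst av m f h \<beta>) < e"
        using hs_bound_lt[OF _ subst_hs[OF f h] lt e] by blast
      then show False using eb by simp
    qed
    then obtain \<alpha> where ea: "e \<le> av (f \<alpha>) * av (ser_prodp h \<alpha> m \<beta>)" by (auto simp: mult)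
    have "av (f \<alpha>) * av (ser_prodp h \<alpha> m \<beta>) \<le> av (f \<alpha>)"
      using tate_le1[OF tate_prodp[OF h]] nn by (simp add: mult_left_le)
    moreover have "av (f \<alpha>) * av (ser_prodp h \<alpha> m \<beta>) \<le> av (ser_prodp h \<alpha> m \<beta>)"
      using tate_le1[OF f] nn by (simp add: mult_left_le_one_le)
    ultimately show "\<beta> \<in> (\<Union>\<alpha>\<in>A. {\<beta>. e \<le> av (ser_prodp h \<alpha> m \<beta>)})"
    proof -
      have "\<alpha> \<in> A" using ea \<open>av (f \<alpha>) * av (ser_prodp h \<alpha> m \<beta>) \<le> av (f \<alpha>)\<close> unfolding A_def by simp
      moreover have "e \<le> av (ser_prodp h \<alpha> m \<beta>)"
        using ea \<open>av (f \<alpha>) * av (ser_prodp h \<alpha> m \<beta>) \<le> av (ser_prodp h \<alpha> m \<beta>)\<close> by simp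
      ultimately show ?thesis by blast
    qed
  qed
  moreover have "finite (\<Union>\<alpha>\<in>A. {\<beta>. e \<le> av (ser_prodp h \<alpha> m \<beta>)})"
  proof (rule finite_UN_I[OF finA])
    fix \<alpha> show "finite {\<beta>. e \<le> av (ser_prodp h \<alpha> m \<beta>)}"
      using tate_prodp[of m n h \<alpha>, OF h] e unfolding tate_def by blast
  qed
  ultimately show "finite {\<beta>. e \<le> av (ser_subst av m f h \<beta>)}" by (rule finite_subset)
qed

end


context nav
begin

lemma le1_mult_le: "av x \<le> 1 \<Longrightarrow> av y \<le> d \<Longrightarrow> av (x * y) \<le> d"
  using mult_right_mono[of "av x" 1 "av y"] nn[of y] by (simp add: mult)

lemma mult_le1_le: "av x \<le> d \<Longrightarrow> av y \<le> 1 \<Longrightarrow> av (x * y) \<le> d"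
  using le1_mult_le[of y x d] by (simp add: mult.commute)

lemma ev_subst:
  assumes f: "tate av m f" and h: "\<And>j. j < m \<Longrightarrow> tate av n (h j)"
    and x: "\<And>i. i < n \<Longrightarrow> av (x i) \<le> 1"
  shows "ser_eval av n (ser_subst av m f h) x = ser_eval av m f (\<lambda>j. ser_eval av n (h j) x)"
proof -
  define P where "P \<alpha> = ser_prodp h \<alpha> m" for \<alpha>
  define S where "S = ser_subst av m f h"
  define y where "y = (\<lambda>j. ser_eval av n (h j) x)"
  have tP: "tate av n (P \<alpha>)" for \<alpha> unfolding P_def by (rule tate_prodp[of m n h \<alpha>, OF h])
  have y1: "av (y j) \<le> 1" if "j < m" for j unfolding y_def by (rule ev_le1[of n "h j" x, OF h[OF that] x])
  define w where "w = (\<lambda>(\<beta>, \<alpha>). f \<alpha> * P \<alpha> \<beta> * mon n x \<beta>)"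
  have nw: "nul w (multi n \<times> multi m)"
    unfolding nul_def
  proof (intro allI impI)
    fix e :: real assume e: "e > 0"
    define A where "A = {\<alpha>. e \<le> av (f \<alpha>)}"
    have finA: "finite A" using f e unfolding tate_def A_def by blast
    have finB: "finite {\<beta>. e \<le> av (P \<alpha> \<beta>)}" for \<alpha> using tP[of \<alpha>] e unfolding tate_def by blast
    have "{p \<in> multi n \<times> multi m. e \<le> av (w p)} \<subseteq> (\<lambda>(\<alpha>, \<beta>). (\<beta>, \<alpha>)) ` (Sigma A (\<lambda>\<alpha>. {\<beta>. e \<le> av (P \<alpha> \<beta>)}))"
    proof
      fix p assume "p \<in> {p \<in> multi n \<times> multi m. e \<le> av (w p)}"
      then obtain \<beta> \<alpha> where p: "p = (\<beta>, \<alpha>)" and ew: "e \<le> av (f \<alpha>) * av (P \<alpha> \<beta>) * av (mon n x \<beta>)"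
        unfolding w_def by (auto simp: mult)
      have m1: "av (mon n x \<beta>) \<le> 1" by (rule av_mon_le1[of n x, OF x])
      have "av (f \<alpha>) * av (P \<alpha> \<beta>) * av (mon n x \<beta>) \<le> av (f \<alpha>) * av (P \<alpha> \<beta>)"
        using m1 nn by (simp add: mult_left_le)
      then have ea: "e \<le> av (f \<alpha>) * av (P \<alpha> \<beta>)" using ew by linarith
      have "av (f \<alpha>) * av (P \<alpha> \<beta>) \<le> av (f \<alpha>)" using tate_le1[OF tP] nn by (simp add: mult_left_le)
      moreover have "av (f \<alpha>) * av (P \<alpha> \<beta>) \<le> av (P \<alpha> \<beta>)"
        using tate_le1[OF f] nn by (simp add: mult_left_le_one_le)
      ultimately have "\<alpha> \<in> A" "\<beta> \<in> {\<beta>. e \<le> av (P \<alpha> \<beta>)}" using ea unfolding A_def by auto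
      then show "p \<in> (\<lambda>(\<alpha>, \<beta>). (\<beta>, \<alpha>)) ` (Sigma A (\<lambda>\<alpha>. {\<beta>. e \<le> av (P \<alpha> \<beta>)}))"
        using p by force
    qed
    moreover have "finite (Sigma A (\<lambda>\<alpha>. {\<beta>. e \<le> av (P \<alpha> \<beta>)}))"
      using finA finB by (intro finite_SigmaI) auto
    ultimately show "finite {p \<in> multi n \<times> multi m. e \<le> av (w p)}"
      by (meson finite_imageI finite_subset)
  qed
  obtain W where hW: "hs w (multi n \<times> multi m) W" using nul_hs_ex[OF nw] by blast
  have tS: "tate av n S" unfolding S_def by (rule tate_subst[of m f n h, OF f h])
  have hS: "hs (\<lambda>\<beta>. S \<beta> * mon n x \<beta>) (multi n) W"
  proof (rule hs_Sigma[OF hW])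
    fix \<beta> assume "\<beta> \<in> multi n"
    have "hs (\<lambda>\<alpha>. mon n x \<beta> * (f \<alpha> * P \<alpha> \<beta>)) (multi m) (mon n x \<beta> * S \<beta>)"
      unfolding P_def S_def by (rule hs_cmult[OF subst_hs[of m f n h \<beta>, OF f h]])
    then show "hs (\<lambda>\<alpha>. w (\<beta>, \<alpha>)) (multi m) (S \<beta> * mon n x \<beta>)"
      unfolding w_def by (simp add: ac_simps)
  qed
  have e1: "ser_eval av n S x = W" by (rule ev_eq[of n S x, OF tS x hS])
  define swp where "swp = (\<lambda>(\<alpha>::nat\<Rightarrow>nat, \<beta>::nat\<Rightarrow>nat). (\<beta>, \<alpha>))"
  have bij: "bij_betw swp (multi m \<times> multi n) (multi n \<times> multi m)"
    unfolding swp_def bij_betw_def inj_on_def by force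
  have "hs (w \<circ> swp) (multi m \<times> multi n) W" using hs_reindex[OF bij] hW by blast
  then have hf: "hs (\<lambda>\<alpha>. f \<alpha> * mon m y \<alpha>) (multi m) W"
  proof (rule hs_Sigma)
    fix \<alpha> assume "\<alpha> \<in> multi m"
    have "hs (\<lambda>\<beta>. f \<alpha> * (P \<alpha> \<beta> * mon n x \<beta>)) (multi n) (f \<alpha> * ser_eval av n (P \<alpha>) x)"
      by (rule hs_cmult[OF ev_hs[of n "P \<alpha>" x, OF tP x]])
    moreover have "ser_eval av n (P \<alpha>) x = mon m y \<alpha>"
      unfolding P_def y_def mon_def by (rule ev_prodp[of m n h x \<alpha>, OF h x])
    ultimately show "hs (\<lambda>\<beta>. (w \<circ> swp) (\<alpha>, \<beta>)) (multi n) (f \<alpha> * mon m y \<alpha>)"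
      unfolding w_def swp_def by (simp add: ac_simps)
  qed
  have e2: "ser_eval av m f y = W" by (rule ev_eq[of m f y, OF f y1 hf])
  show ?thesis using e1 e2 unfolding S_def y_def by simp
qed

lemma pow_diff_le:
  assumes "av x \<le> 1" "av y \<le> 1" "av (x - y) \<le> d"
  shows "av (x ^ k - y ^ k) \<le> d"
proof (induction k)
  case 0
  then show ?case using assms(3) nn[of "x - y"] by simp
next
  case (Suc k)
  have eq: "x ^ Suc k - y ^ Suc k = x * (x ^ k - y ^ k) + (x - y) * y ^ k" by (simp add: algebra_simps)
  have a: "av (x * (x ^ k - y ^ k)) \<le> d"
    using Suc assms(1) by (intro le1_mult_le)
  have b: "av ((x - y) * y ^ k) \<le> d"
    using assms(3) av_power_le1[OF assms(2), of k] by (intro mult_le1_le)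
  show ?case unfolding eq using a b by (rule ultra_le)
qed

lemma prod_diff_le:
  assumes "finite S" "\<And>i. i \<in> S \<Longrightarrow> av (a i) \<le> 1" "\<And>i. i \<in> S \<Longrightarrow> av (b i) \<le> 1"
    "\<And>i. i \<in> S \<Longrightarrow> av (a i - b i) \<le> d" "0 \<le> d"
  shows "av (prod a S - prod b S) \<le> d"
  using assms
proof (induction S rule: finite_induct)
  case empty then show ?case by simp
next
  case (insert k S)
  have eq: "prod a (insert k S) - prod b (insert k S) = a k * (prod a S - prod b S) + (a k - b k) * prod b S"
    using insert(1,2) by (simp add: algebra_simps)
  have ih: "av (prod a S - prod b S) \<le> d" using insert by auto
  have a: "av (a k * (prod a S - prod b S)) \<le> d"
    using ih insert.prems(1)[of k] by (intro le1_mult_le) auto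
  have pb: "av (prod b S) \<le> 1" using insert.prems(2) by (intro av_prod_le1) auto
  have b: "av ((a k - b k) * prod b S) \<le> d"
    using insert.prems(3)[of k] pb by (intro mult_le1_le) auto
  show ?case unfolding eq using a b by (rule ultra_le)
qed

lemma ev_lip:
  assumes f: "tate av m f" and x1: "\<And>i. i < m \<Longrightarrow> av (x i) \<le> 1" and y1: "\<And>i. i < m \<Longrightarrow> av (y i) \<le> 1"
    and xy: "\<And>i. i < m \<Longrightarrow> av (x i - y i) \<le> d" and d: "0 \<le> d"
  shows "av (ser_eval av m f x - ser_eval av m f y) \<le> d"
proof -
  have H: "hs (\<lambda>\<alpha>. f \<alpha> * mon m x \<alpha> - f \<alpha> * mon m y \<alpha>) (multi m) (ser_eval av m f x - ser_eval av m f y)"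
    by (rule hs_diff[OF ev_hs[of m f x, OF f x1] ev_hs[of m f y, OF f y1]])
  have "av (f \<alpha> * mon m x \<alpha> - f \<alpha> * mon m y \<alpha>) \<le> d" for \<alpha>
  proof -
    have md: "av (mon m x \<alpha> - mon m y \<alpha>) \<le> d" unfolding mon_def
      by (rule prod_diff_le) (auto simp: d intro!: av_power_le1 pow_diff_le x1 y1 xy)
    have "f \<alpha> * mon m x \<alpha> - f \<alpha> * mon m y \<alpha> = f \<alpha> * (mon m x \<alpha> - mon m y \<alpha>)" by (simp add: algebra_simps)
    then show ?thesis using le1_mult_le[OF tate_le1[OF f, of \<alpha>] md] by simp
  qed
  then show ?thesis using hs_bound[OF H, where B=d] d by simp
qed

lemma disk_le1: "x \<in> disk av N \<Longrightarrow> i < N \<Longrightarrow> av (x i) \<le> 1"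
  unfolding disk_def by blast

lemma iter_facts:
  assumes F: "\<And>i. i < N \<Longrightarrow> tate av N (F i)" and a: "a \<in> disk av N"
  shows "(Fmap av N F ^^ n) a \<in> disk av N \<and> (\<forall>i<N. tate av N (ser_iter av N F n i) \<and>
            ser_eval av N (ser_iter av N F n i) a = (Fmap av N F ^^ n) a i)"
proof (induction n)
  case 0
  have a1: "\<And>i. i < N \<Longrightarrow> av (a i) \<le> 1" using a by (rule disk_le1)
  show ?case using a by (simp add: tate_var ev_var[OF a1])
next
  case (Suc n)
  define D where "D = (Fmap av N F ^^ n) a"
  have D: "D \<in> disk av N" using Suc D_def by simp
  have D1: "\<And>i. i < N \<Longrightarrow> av (D i) \<le> 1" using D by (rule disk_le1)
  have a1: "\<And>i. i < N \<Longrightarrow> av (a i) \<le> 1" using a by (rule disk_le1)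
  have tI: "\<And>j. j < N \<Longrightarrow> tate av N (ser_iter av N F n j)" using Suc by simp
  have eI: "\<And>j. j < N \<Longrightarrow> ser_eval av N (ser_iter av N F n j) a = D j" using Suc D_def by simp
  have step: "(Fmap av N F ^^ Suc n) a = Fmap av N F D" unfolding D_def by simp
  have disk: "Fmap av N F D \<in> disk av N"
    unfolding disk_def Fmap_def using ev_le1[OF F D1] by auto
  have "tate av N (ser_iter av N F (Suc n) i) \<and> ser_eval av N (ser_iter av N F (Suc n) i) a = Fmap av N F D i"
    if i: "i < N" for i
  proof
    show "tate av N (ser_iter av N F (Suc n) i)"
      by (simp add: tate_subst[of N "F i" N "ser_iter av N F n", OF F[OF i] tI])
    have "ser_eval av N (ser_iter av N F (Suc n) i) a = ser_eval av N (F i) (\<lambda>j. ser_eval av N (ser_iter av N F n j) a)"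
      by (simp add: ev_subst[of N "F i" N "ser_iter av N F n" a, OF F[OF i] tI a1])
    also have "\<dots> = ser_eval av N (F i) D" by (rule ser_eval_cong) (simp add: eI)
    also have "\<dots> = Fmap av N F D i" unfolding Fmap_def using i by simp
    finally show "ser_eval av N (ser_iter av N F (Suc n) i) a = Fmap av N F D i" .
  qed
  then show ?case using disk step by simp
qed

end


fun hcs :: "nat \<Rightarrow> 'a::comm_ring_1 list \<Rightarrow> 'a" where
  "hcs 0 zs = 1"
| "hcs (Suc k) [] = 0"
| "hcs (Suc k) (x # zs) = x * hcs k (x # zs) + hcs (Suc k) zs"

lemma hcs_diff: "hcs (Suc k) (x # zs) - hcs (Suc k) (y # zs) = (x - y) * hcs k (x # y # zs)"
proof (induction k)
  case 0 then show ?case by simp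
next
  case (Suc k)
  have "hcs (Suc (Suc k)) (x # zs) - hcs (Suc (Suc k)) (y # zs)
      = x * (hcs (Suc k) (x # zs) - hcs (Suc k) (y # zs)) + (x - y) * hcs (Suc k) (y # zs)"
    by (simp add: algebra_simps)
  also have "\<dots> = x * ((x - y) * hcs k (x # y # zs)) + (x - y) * hcs (Suc k) (y # zs)"
    using Suc by simp
  also have "\<dots> = (x - y) * hcs (Suc k) (x # y # zs)" by (simp add: algebra_simps)
  finally show ?case .
qed

lemma hcs_single: "hcs k [x] = x ^ k"
  by (induction k) simp_all

fun dd :: "('a::field \<Rightarrow> 'a) \<Rightarrow> 'a list \<Rightarrow> 'a" where
  "dd f [] = 0"
| "dd f [x] = f x"
| "dd f (x # y # zs) = (dd f (x # zs) - dd f (y # zs)) / (x - y)"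

lemma list2_induct:
  assumes "P []" "\<And>x. P [x]" "\<And>x y zs. P (x # zs) \<Longrightarrow> P (y # zs) \<Longrightarrow> P (x # y # zs)"
  shows "P xs"
proof (induction xs rule: length_induct)
  case (1 xs)
  show ?case
  proof (cases xs)
    case Nil then show ?thesis using assms(1) by simp
  next
    case (Cons x ys)
    show ?thesis
    proof (cases ys)
      case Nil then show ?thesis using Cons assms(2) by simp
    next
      case (Cons y zs)
      have "P (x # zs)" "P (y # zs)" using 1 Cons \<open>xs = x # ys\<close> by auto
      then show ?thesis using assms(3) Cons \<open>xs = x # ys\<close> by simp
    qed
  qed
qed

lemma dd_mono:
  "distinct zs \<Longrightarrow> zs \<noteq> [] \<Longrightarrow>
    dd (\<lambda>z. z ^ j) zs = (if length zs \<le> j + 1 then hcs (j + 1 - length zs) zs else 0)"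
proof (induction zs rule: list2_induct)
  case 1 then show ?case by simp
next
  case (2 x) then show ?case by (simp add: hcs_single)
next
  case (3 x y zs)
  have xy: "x \<noteq> y" and dx: "distinct (x # zs)" and dy: "distinct (y # zs)" using "3.prems" by auto
  have IHx: "dd (\<lambda>z. z ^ j) (x # zs) = (if Suc (length zs) \<le> j + 1 then hcs (j + 1 - Suc (length zs)) (x # zs) else 0)"
    using "3.IH"(1) dx by simp
  have IHy: "dd (\<lambda>z. z ^ j) (y # zs) = (if Suc (length zs) \<le> j + 1 then hcs (j + 1 - Suc (length zs)) (y # zs) else 0)"
    using "3.IH"(2) dy by simp
  have xy0: "x - y \<noteq> 0" using xy by simp
  show ?case
  proof (cases "length zs + 2 \<le> j + 1")
    case True
    then obtain k where k: "j + 1 - Suc (length zs) = Suc k" "j + 1 - length (x # y # zs) = k"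
      by (metis Suc_diff_Suc add_2_eq_Suc' length_Cons less_eq_Suc_le plus_1_eq_Suc)
    have "dd (\<lambda>z. z ^ j) (x # y # zs) = (hcs (Suc k) (x # zs) - hcs (Suc k) (y # zs)) / (x - y)"
      using IHx IHy True k by simp
    also have "\<dots> = hcs k (x # y # zs)"
    proof -
      have "hcs (Suc k) (x # zs) - hcs (Suc k) (y # zs) = (x - y) * hcs k (x # y # zs)"
        by (rule hcs_diff)
      then show ?thesis using xy0 by (metis nonzero_mult_div_cancel_left)
    qed
    finally show ?thesis using True k by simp
  next
    case False
    then have "dd (\<lambda>z. z ^ j) (x # zs) = dd (\<lambda>z. z ^ j) (y # zs)" using IHx IHy
      by (cases "Suc (length zs) \<le> j + 1") auto
    then show ?thesis using False by simp
  qed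
qed

lemma dd_lin:
  "dd (\<lambda>z. \<Sum>k\<in>K. c k * g k z) zs = (\<Sum>k\<in>K. c k * dd (g k) zs)"
proof (induction zs rule: list2_induct)
  case 1 then show ?case by simp
next
  case (2 x) then show ?case by simp
next
  case (3 x y zs)
  then show ?case
    by (simp add: sum_subtractf[symmetric] sum_divide_distrib right_diff_distrib)
qed

context nav
begin

lemma hcs_le1: "(\<And>z. z \<in> set zs \<Longrightarrow> av z \<le> 1) \<Longrightarrow> av (hcs k zs) \<le> 1"
proof (induction k zs rule: hcs.induct)
  case (1 zs) then show ?case by simp
next
  case (2 k) then show ?case by simp
next
  case (3 k x zs)
  have a: "av (x * hcs k (x # zs)) \<le> 1" using 3 by (intro av_mult_le1) auto
  have b: "av (hcs (Suc k) zs) \<le> 1" using 3 by auto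
  show ?case using ultra_le[OF a b] by simp
qed

lemma dd_bound:
  assumes "distinct zs" "\<And>z. z \<in> set zs \<Longrightarrow> av (f z) \<le> eps"
    "\<And>z w. z \<in> set zs \<Longrightarrow> w \<in> set zs \<Longrightarrow> z \<noteq> w \<Longrightarrow> r \<le> av (z - w)" "r > 0" "eps \<ge> 0"
  shows "av (dd f zs) \<le> eps / r ^ (length zs - 1)"
  using assms(1-3)
proof (induction zs rule: list2_induct)
  case 1 then show ?case using assms(5) by simp
next
  case (2 x) then show ?case by simp
next
  case (3 x y zs)
  have xy: "x \<noteq> y" using "3.prems" by auto
  have A: "av (dd f (x # zs)) \<le> eps / r ^ length zs" using "3.IH"(1) "3.prems" by auto
  have B: "av (dd f (y # zs)) \<le> eps / r ^ length zs" using "3.IH"(2) "3.prems" by auto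
  have AB: "av (dd f (x # zs) - dd f (y # zs)) \<le> eps / r ^ length zs" using ultra_diff_le[OF A B] .
  have rxy: "r \<le> av (x - y)" using "3.prems" xy by auto
  have "av (dd f (x # y # zs)) = av (dd f (x # zs) - dd f (y # zs)) / av (x - y)"
    by (simp add: av_divide)
  also have "\<dots> \<le> (eps / r ^ length zs) / r"
  proof (rule frac_le)
    show "0 \<le> eps / r ^ length zs" using assms(4,5) by simp
  qed (use AB assms(4) rxy in auto)
  also have "\<dots> = eps / r ^ (length (x # y # zs) - 1)" by simp
  finally show ?case .
qed

end


definition iota :: "nat \<Rightarrow> nat \<Rightarrow> nat" where
  "iota k = (\<lambda>i. if i = 0 then k else 0)"

lemma bij_iota: "bij_betw iota UNIV (multi 1)"
  unfolding bij_betw_def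
proof
  show "inj_on iota UNIV" unfolding inj_on_def iota_def by (metis)
  show "range iota = multi 1"
  proof
    show "range iota \<subseteq> multi 1" unfolding iota_def multi_def by auto
    show "multi 1 \<subseteq> range iota"
    proof
      fix \<alpha> assume "\<alpha> \<in> multi 1"
      then have "\<alpha> = iota (\<alpha> 0)" unfolding iota_def multi_def by (auto simp: fun_eq_iff)
      then show "\<alpha> \<in> range iota" by blast
    qed
  qed
qed

lemma mon_iota: "mon 1 (\<lambda>_. z) (iota k) = z ^ k"
  unfolding mon_def iota_def by simp

context nav
begin

lemma onevar_hs:
  assumes "tate av 1 \<Psi>" "av z \<le> 1"
  shows "hs (\<lambda>k. \<Psi> (iota k) * z ^ k) UNIV (ser_eval av 1 \<Psi> (\<lambda>_. z))"
proof -
  have "hs (\<lambda>\<alpha>. \<Psi> \<alpha> * mon 1 (\<lambda>_. z) \<alpha>) (multi 1) (ser_eval av 1 \<Psi> (\<lambda>_. z))"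
    by (rule ev_hs[OF assms(1)]) (use assms(2) in simp)
  then have "hs ((\<lambda>\<alpha>. \<Psi> \<alpha> * mon 1 (\<lambda>_. z) \<alpha>) \<circ> iota) UNIV (ser_eval av 1 \<Psi> (\<lambda>_. z))"
    using hs_reindex[OF bij_iota] by blast
  then show ?thesis by (simp only: comp_def mon_iota)
qed

lemma onevar_nul:
  assumes "tate av 1 \<Psi>" shows "nul (\<lambda>k. \<Psi> (iota k)) UNIV"
  unfolding nul_def
proof (intro allI impI)
  fix e :: real assume e: "e > 0"
  have "{k \<in> UNIV. e \<le> av (\<Psi> (iota k))} = iota -` {\<alpha>. e \<le> av (\<Psi> \<alpha>)}" by auto
  moreover have "finite {\<alpha>. e \<le> av (\<Psi> \<alpha>)}" using assms e unfolding tate_def by blast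
  moreover have "inj iota" using bij_iota by (simp add: bij_betw_def)
  ultimately show "finite {k \<in> UNIV. e \<le> av (\<Psi> (iota k))}" using finite_vimageI by metis
qed

lemma lam_exists:
  fixes b :: "nat \<Rightarrow> 'k"
  assumes nb: "nul b UNIV" and k0: "b k0 \<noteq> 0"
  shows "\<exists>e lam. av (b e) = lam \<and> lam > 0 \<and> (\<forall>k. av (b k) \<le> lam) \<and> (\<forall>k>e. av (b k) < lam)"
proof -
  have p0: "av (b k0) > 0" using k0 by (rule av_pos)
  define A where "A = {k. av (b k0) \<le> av (b k)}"
  have finA: "finite A" using nb p0 unfolding nul_def A_def by simp
  have k0A: "k0 \<in> A" unfolding A_def by simp
  define lam where "lam = Max ((\<lambda>k. av (b k)) ` A)"
  have lamin: "lam \<in> (\<lambda>k. av (b k)) ` A" unfolding lam_def using finA k0A by (intro Max_in) auto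
  have lamge: "av (b k) \<le> lam" if "k \<in> A" for k unfolding lam_def using finA that by (intro Max_ge) auto
  have lam0: "av (b k0) \<le> lam" using lamge[OF k0A] .
  have all: "av (b k) \<le> lam" for k
  proof (cases "k \<in> A")
    case True then show ?thesis by (rule lamge)
  next
    case False then show ?thesis using lam0 unfolding A_def by simp
  qed
  define E where "E = {k\<in>A. av (b k) = lam}"
  have finE: "finite E" using finA unfolding E_def by simp
  have neE: "E \<noteq> {}" using lamin unfolding E_def by auto
  define e where "e = Max E"
  have eE: "e \<in> E" unfolding e_def using finE neE by (rule Max_in)
  have gt: "av (b k) < lam" if "k > e" for k
  proof (rule ccontr)
    assume "\<not> av (b k) < lam"
    then have "av (b k) = lam" using all[of k] by simp
    then have "k \<in> E" unfolding E_def A_def using lam0 by simp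
    then have "k \<le> e" unfolding e_def using finE by (simp add: Max_ge)
    then show False using that by simp
  qed
  have "lam > 0" using p0 lam0 by simp
  moreover have "av (b e) = lam" using eE unfolding E_def by simp
  ultimately show ?thesis using all gt by blast
qed

lemma dd_main:
  fixes b :: "nat \<Rightarrow> 'k" and Phi :: "'k \<Rightarrow> 'k"
  assumes nb: "nul b UNIV"
    and lam: "av (b e) = lam" "lam > 0" "\<And>k. av (b k) \<le> lam" "\<And>k. k > e \<Longrightarrow> av (b k) < lam"
    and Ph: "\<And>z. av z \<le> 1 \<Longrightarrow> hs (\<lambda>k. b k * z ^ k) UNIV (Phi z)"
    and zs: "distinct zs" "length zs = e + 1" "\<And>z. z \<in> set zs \<Longrightarrow> av z \<le> 1"
      "\<And>z. z \<in> set zs \<Longrightarrow> av (Phi z) \<le> eps" "eps > 0"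
      "\<And>z w. z \<in> set zs \<Longrightarrow> w \<in> set zs \<Longrightarrow> z \<noteq> w \<Longrightarrow> r \<le> av (z - w)" "r > 0"
  shows "lam * r ^ e \<le> eps"
proof -
  define \<delta> where "\<delta> = min eps lam"
  have \<delta>0: "\<delta> > 0" using zs(5) lam(2) unfolding \<delta>_def by simp
  have finT: "finite {k. \<delta> \<le> av (b k)}" using nb \<delta>0 unfolding nul_def by simp
  define D where "D = max e (if {k. \<delta> \<le> av (b k)} = {} then 0 else Max {k. \<delta> \<le> av (b k)})"
  have De: "e \<le> D" unfolding D_def by simp
  have bD: "av (b k) < \<delta>" if "k > D" for k
  proof (rule ccontr)
    assume "\<not> av (b k) < \<delta>"
    then have kT: "k \<in> {k. \<delta> \<le> av (b k)}" by simp
    then have "k \<le> Max {k. \<delta> \<le> av (b k)}" using finT by (intro Max_ge)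
    then show False using that kT unfolding D_def by (auto split: if_splits)
  qed
  define P where "P z = (\<Sum>k\<le>D. b k * z ^ k)" for z
  have Pbound: "av (P z) \<le> eps" if z: "z \<in> set zs" for z
  proof -
    have z1: "av z \<le> 1" using zs(3) z by simp
    define g where "g k = (if k \<in> {..D} then b k * z ^ k else 0)" for k
    have "hs g {..D} (sum g {..D})" by (rule hs_finite) simp
    then have "hs g {..D} (P z)" unfolding P_def g_def by simp
    then have hP: "hs g UNIV (P z)" using hs_zero_outside[of "{..D}" UNIV g] unfolding g_def by auto
    have hd: "hs (\<lambda>k. b k * z ^ k - g k) UNIV (Phi z - P z)"
      by (rule hs_diff[OF Ph[OF z1] hP])
    have le: "av (b k * z ^ k - g k) \<le> av (b k)" for k
    proof -
      have "av (b k * z ^ k) \<le> av (b k)"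
        using av_power_le1[OF z1, of k] nn by (simp add: mult mult_left_le)
      then show ?thesis unfolding g_def using nn by auto
    qed
    have nd: "nul (\<lambda>k. b k * z ^ k - g k) UNIV" by (rule nul_mono[OF nb le])
    have lt: "av (b k * z ^ k - g k) < \<delta>" for k
    proof (cases "k \<le> D")
      case True then show ?thesis using \<delta>0 unfolding g_def by simp
    next
      case False then show ?thesis using le[of k] bD[of k] by simp
    qed
    have "av (Phi z - P z) < \<delta>" by (rule hs_bound_lt[OF nd hd lt \<delta>0])
    then have a: "av (P z - Phi z) \<le> eps" using av_sub_comm[of "Phi z" "P z"] unfolding \<delta>_def by simp
    have b: "av (Phi z) \<le> eps" using zs(4) z .
    have "P z = Phi z + (P z - Phi z)" by simp
    then show ?thesis using ultra_le[OF b a] by simp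
  qed
  have ddP: "dd P zs = (\<Sum>k\<le>D. b k * dd (\<lambda>z. z ^ k) zs)" unfolding P_def by (rule dd_lin)
  have zsne: "zs \<noteq> []" using zs(2) by auto
  have ddm: "dd (\<lambda>z. z ^ k) zs = (if e \<le> k then hcs (k - e) zs else 0)" for k
    using dd_mono[OF zs(1) zsne, of k] zs(2) by simp
  have split: "(\<Sum>k\<le>D. b k * dd (\<lambda>z. z ^ k) zs) = b e + (\<Sum>k\<in>{..D}-{e}. b k * dd (\<lambda>z. z ^ k) zs)"
  proof -
    have "(\<Sum>k\<le>D. b k * dd (\<lambda>z. z ^ k) zs) = b e * dd (\<lambda>z. z ^ e) zs + (\<Sum>k\<in>{..D}-{e}. b k * dd (\<lambda>z. z ^ k) zs)"
      using De by (subst sum.remove[of "{..D}" e]) auto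
    then show ?thesis using ddm[of e] by simp
  qed
  have zs1: "\<And>z. z \<in> set zs \<Longrightarrow> av z \<le> 1" by (rule zs(3))
  have rest: "av (\<Sum>k\<in>{..D}-{e}. b k * dd (\<lambda>z. z ^ k) zs) < lam"
  proof (rule av_sum_lt[OF lam(2)])
    fix k assume k: "k \<in> {..D} - {e}"
    show "av (b k * dd (\<lambda>z. z ^ k) zs) < lam"
    proof (cases "e \<le> k")
      case True
      then have "k > e" using k by auto
      then have "av (b k) < lam" by (rule lam(4))
      moreover have "av (b k * dd (\<lambda>z. z ^ k) zs) \<le> av (b k)"
        using ddm[of k] True hcs_le1[OF zs1, where k="k - e"] nn by (simp add: mult mult_left_le)
      ultimately show ?thesis by simp
    next
      case False then show ?thesis using ddm[of k] lam(2) by simp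
    qed
  qed
  have "av (dd P zs) = lam"
    using av_strict[of "\<Sum>k\<in>{..D}-{e}. b k * dd (\<lambda>z. z ^ k) zs" "b e"] rest lam(1) ddP split by simp
  moreover have "av (dd P zs) \<le> eps / r ^ (length zs - 1)"
    by (rule dd_bound[OF zs(1) Pbound zs(6) zs(7)]) (use zs(5) in auto)
  ultimately have "lam \<le> eps / r ^ e" using zs(2) by simp
  then show ?thesis using zs(7) by (simp add: pos_le_divide_eq)
qed

end


definition cnt :: "nat set \<Rightarrow> nat \<Rightarrow> nat" where
  "cnt T n = card {i. i \<le> n \<and> i \<in> T}"

lemma cnt_le: "real (cnt T n) \<le> real n + 1"
proof -
  have "cnt T n \<le> card {..n}" unfolding cnt_def by (rule card_mono) auto
  then show ?thesis by simp
qed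

lemma cnt_mono: "n \<le> n' \<Longrightarrow> cnt T n \<le> cnt T n'"
  unfolding cnt_def by (rule card_mono) auto

lemma ln_funpow_mono:
  "(exp ^^ m) 0 \<le> x \<Longrightarrow> x \<le> y \<Longrightarrow> (ln ^^ m) x \<le> (ln ^^ m) (y::real)"
proof (induction m arbitrary: x y)
  case 0 then show ?case by simp
next
  case (Suc m)
  have ex: "exp ((exp ^^ m) 0) \<le> x" using Suc.prems(1) by simp
  then have x0: "x > 0" by (meson exp_gt_zero less_le_trans)
  have "(exp ^^ m) 0 \<le> ln x" using ex x0 by (metis exp_le_cancel_iff exp_ln)
  moreover have "ln x \<le> ln y" using x0 Suc.prems(2) by simp
  ultimately have "(ln ^^ m) (ln x) \<le> (ln ^^ m) (ln y)" by (rule Suc.IH)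
  then show ?case by (simp only: funpow_Suc_right o_apply)
qed

lemma ln_funpow_at_top: "filterlim (ln ^^ m) at_top (at_top :: real filter)"
proof (induction m)
  case 0 then show ?case by (simp add: filterlim_ident)
next
  case (Suc m)
  have "filterlim (\<lambda>x. ln ((ln ^^ m) x)) at_top (at_top :: real filter)"
    by (rule filterlim_compose[OF ln_at_top Suc])
  then show ?case by (simp add: comp_def)
qed

lemma ln_funpow_scale_aux:
  "m \<ge> 1 \<Longrightarrow> \<forall>K>0. \<exists>D Y0. \<forall>y::real\<ge>Y0. (ln ^^ m) (K * y) \<le> (ln ^^ m) y + D"
proof (induction m)
  case 0 then show ?case by simp
next
  case (Suc m)
  show ?case
  proof (intro allI impI)
    fix K :: real assume K: "K > 0"
    show "\<exists>D Y0. \<forall>y::real\<ge>Y0. (ln ^^ Suc m) (K * y) \<le> (ln ^^ Suc m) y + D"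
    proof (cases "m = 0")
      case True
      have "\<forall>y::real\<ge>1. (ln ^^ Suc m) (K * y) \<le> (ln ^^ Suc m) y + ln K"
      proof (intro allI impI)
        fix y :: real assume "1 \<le> y"
        then have "y > 0" by simp
        then show "(ln ^^ Suc m) (K * y) \<le> (ln ^^ Suc m) y + ln K"
          using True K by (simp add: ln_mult)
      qed
      then show ?thesis by blast
    next
      case False
      then have "m \<ge> 1" by simp
      then have "\<forall>K>0. \<exists>D Y0. \<forall>y::real\<ge>Y0. (ln ^^ m) (K * y) \<le> (ln ^^ m) y + D"
        by (rule Suc.IH)
      then have "\<exists>D Y0. \<forall>y::real\<ge>Y0. (ln ^^ m) (2 * y) \<le> (ln ^^ m) y + D" by simp
      then obtain D2 Y2 where IH: "\<And>y::real. y \<ge> Y2 \<Longrightarrow> (ln ^^ m) (2 * y) \<le> (ln ^^ m) y + D2"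
        by blast
      define E where "E = (exp ^^ m) (0::real)"
      define Y0 where "Y0 = exp (\<bar>ln K\<bar> + \<bar>Y2\<bar> + \<bar>E\<bar>)"
      have "(ln ^^ Suc m) (K * y) \<le> (ln ^^ Suc m) y + D2" if y: "y \<ge> Y0" for y :: real
      proof -
        have y0: "y > 0" using y unfolding Y0_def by (meson exp_gt_zero less_le_trans)
        have ly: "ln y \<ge> \<bar>ln K\<bar> + \<bar>Y2\<bar> + \<bar>E\<bar>" using y y0 unfolding Y0_def
          by (metis exp_le_cancel_iff exp_ln)
        have "(ln ^^ Suc m) (K * y) = (ln ^^ m) (ln (K * y))" by (simp only: funpow_Suc_right o_apply)
        also have "ln (K * y) = ln K + ln y" using y0 K by (simp add: ln_mult)
        finally have eq: "(ln ^^ Suc m) (K * y) = (ln ^^ m) (ln K + ln y)" .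
        have "(ln ^^ m) (ln K + ln y) \<le> (ln ^^ m) (2 * ln y)"
          by (rule ln_funpow_mono) (use ly in \<open>auto simp: E_def\<close>)
        also have "\<dots> \<le> (ln ^^ m) (ln y) + D2" by (rule IH) (use ly in auto)
        also have "(ln ^^ m) (ln y) = (ln ^^ Suc m) y" by (simp only: funpow_Suc_right o_apply)
        finally show ?thesis using eq by simp
      qed
      then show ?thesis by blast
    qed
  qed
qed

lemma ln_funpow_scale:
  fixes K :: real
  assumes "m \<ge> 1" "K > 0"
  shows "\<exists>D Y0. \<forall>y::real\<ge>Y0. (ln ^^ m) (K * y) \<le> (ln ^^ m) y + D"
  using ln_funpow_scale_aux[OF assms(1)] assms(2) by blast

lemma ln_lin:
  fixes C c D :: real
  assumes "0 \<le> C" "0 < c"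
  shows "\<exists>Y0\<ge>1. \<forall>Y\<ge>Y0. C * ln Y + D \<le> c * Y"
proof -
  define Y0 where "Y0 = max 1 (((2 * C + \<bar>D\<bar> + 1) / c)\<^sup>2)"
  have "C * ln Y + D \<le> c * Y" if Y: "Y \<ge> Y0" for Y
  proof -
    define s where "s = sqrt Y"
    have Y1: "Y \<ge> 1" using Y unfolding Y0_def by simp
    have s1: "s \<ge> 1" unfolding s_def using Y1 by simp
    have "((2 * C + \<bar>D\<bar> + 1) / c)\<^sup>2 \<le> Y" using Y unfolding Y0_def by simp
    then have "sqrt (((2 * C + \<bar>D\<bar> + 1) / c)\<^sup>2) \<le> s" unfolding s_def by (rule real_sqrt_le_mono)
    moreover have "(2 * C + \<bar>D\<bar> + 1) / c \<ge> 0" using assms by simp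
    moreover have "\<bar>2 * C + \<bar>D\<bar> + 1\<bar> = 2 * C + \<bar>D\<bar> + 1" using assms(1) by simp
    moreover have "\<bar>c\<bar> = c" using assms(2) by simp
    ultimately have "(2 * C + \<bar>D\<bar> + 1) / c \<le> s" by simp
    then have cs: "2 * C + \<bar>D\<bar> + 1 \<le> c * s" using assms(2) by (simp add: divide_le_eq mult.commute)
    have Ys: "Y = s * s" unfolding s_def using Y1 by simp
    have lnY: "ln Y = 2 * ln s" unfolding s_def using Y1 by (simp add: ln_sqrt)
    have lns: "ln s \<le> s" using ln_le_minus_one[of s] s1 by simp
    have "C * ln Y \<le> 2 * C * s" using lnY lns assms(1) by (simp add: mult_left_mono)
    moreover have "D \<le> \<bar>D\<bar> * s" using s1 by (metis abs_ge_self abs_ge_zero mult_left_mono mult.right_neutral order_trans)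
    ultimately have "C * ln Y + D \<le> (2 * C + \<bar>D\<bar>) * s" by (simp add: algebra_simps)
    also have "\<dots> \<le> (c * s) * s" using cs s1 by (intro mult_right_mono) auto
    finally show ?thesis using Ys by (simp add: mult.assoc)
  qed
  moreover have "Y0 \<ge> 1" unfolding Y0_def by simp
  ultimately show ?thesis by blast
qed


lemma count_small:
  fixes T :: "nat set" and lam c' :: real and e :: nat
  assumes lam: "lam > 0" and c': "c' > 0"
    and G: "\<And>t n. t \<in> T \<Longrightarrow> 1 \<le> n \<Longrightarrow> e + 1 \<le> card (T \<inter> {t..n}) \<Longrightarrow> lam * exp (c' * real t) \<le> real n ^ e"
  shows "(\<lambda>n. real (cnt T n)) \<in> o(\<lambda>n. (ln ^^ Suc m) (real n))"
proof -
  define K where "K = (real e + \<bar>ln lam\<bar>) / c' + 1"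
  have K0: "K > 0" unfolding K_def using c' by (simp add: add_nonneg_pos)
  define n3 where "n3 = max 1 (nat \<lceil>exp (1::real)\<rceil>)"
  have n3: "exp 1 \<le> real n" "1 \<le> n" if "n \<ge> n3" for n
  proof -
    have "exp 1 \<le> real (nat \<lceil>exp (1::real)\<rceil>)" by linarith
    also have "\<dots> \<le> real n"
    proof -
      have "nat \<lceil>exp (1::real)\<rceil> \<le> n" using that unfolding n3_def by (metis max.bounded_iff)
      then show ?thesis by (simp only: of_nat_le_iff)
    qed
    finally show "exp 1 \<le> real n" .
    show "1 \<le> n" using that unfolding n3_def by (metis max.bounded_iff)
  qed
  have A: "real t \<le> K * ln (real n)" if n: "n \<ge> n3" and le: "lam * exp (c' * real t) \<le> real n ^ e" for t n
  proof -
    have n0: "real n > 0" using n3(2)[OF n] by simp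
    have ln1: "ln (real n) \<ge> 1" using n3(1)[OF n] n0 by (metis exp_le_cancel_iff exp_ln)
    have pos: "lam * exp (c' * real t) > 0" using lam by simp
    have "ln (lam * exp (c' * real t)) \<le> ln (real n ^ e)" using le pos n0 by (subst ln_le_cancel_iff) auto
    then have "ln lam + c' * real t \<le> real e * ln (real n)" using lam n0 by (simp add: ln_mult ln_realpow)
    then have "c' * real t \<le> real e * ln (real n) + \<bar>ln lam\<bar> * ln (real n)"
      using ln1 by (smt (verit) mult_le_cancel_left1)
    then have "c' * real t \<le> (real e + \<bar>ln lam\<bar>) * ln (real n)" by (simp add: algebra_simps)
    then have "real t \<le> ((real e + \<bar>ln lam\<bar>) / c') * ln (real n)" using c'
      by (simp add: field_simps)
    also have "\<dots> \<le> K * ln (real n)"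
    proof (rule mult_right_mono)
      show "(real e + \<bar>ln lam\<bar>) / c' \<le> K" unfolding K_def by simp
    qed (use ln1 in simp)
    finally show ?thesis .
  qed
  define Lf where "Lf n = nat \<lfloor>K * ln (real n)\<rfloor>" for n
  have step: "cnt T n \<le> cnt T (Lf n) + e" if n: "n \<ge> n3" for n
  proof -
    define L where "L = Lf n"
    have sub: "{i. i \<le> n \<and> i \<in> T} \<subseteq> {i. i \<le> L \<and> i \<in> T} \<union> (T \<inter> {Suc L..n})" by auto
    have fin: "finite (T \<inter> {Suc L..n})" by simp
    have small: "card (T \<inter> {Suc L..n}) \<le> e"
    proof (rule ccontr)
      assume "\<not> ?thesis"
      then have big: "e + 1 \<le> card (T \<inter> {Suc L..n})" by simp
      then have ne: "T \<inter> {Suc L..n} \<noteq> {}" by auto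
      define t where "t = Min (T \<inter> {Suc L..n})"
      have tin: "t \<in> T \<inter> {Suc L..n}" unfolding t_def using fin ne by (rule Min_in)
      have "T \<inter> {Suc L..n} \<subseteq> T \<inter> {t..n}" unfolding t_def using fin by auto
      then have "card (T \<inter> {Suc L..n}) \<le> card (T \<inter> {t..n})" by (intro card_mono) auto
      then have "e + 1 \<le> card (T \<inter> {t..n})" using big by simp
      then have "lam * exp (c' * real t) \<le> real n ^ e" using G[of t n] tin n3(2)[OF n] by simp
      then have "real t \<le> K * ln (real n)" by (rule A[OF n])
      then have "int t \<le> \<lfloor>K * ln (real n)\<rfloor>" by (simp add: le_floor_iff)
      then have "t \<le> L" unfolding L_def Lf_def by simp
      then show False using tin by simp
    qed
    have "cnt T n \<le> card ({i. i \<le> L \<and> i \<in> T} \<union> (T \<inter> {Suc L..n}))"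
      unfolding cnt_def by (rule card_mono[OF _ sub]) simp
    also have "\<dots> \<le> cnt T L + card (T \<inter> {Suc L..n})" unfolding cnt_def by (rule card_Un_le)
    finally show ?thesis using small unfolding L_def by simp
  qed
  have lnn0: "ln (real n) \<ge> 0" if "n \<ge> n3" for n using n3(2)[OF that] by simp
  have Lf_le: "real (Lf n) \<le> K * ln (real n)" if "n \<ge> n3" for n
  proof -
    have "K * ln (real n) \<ge> 0" using K0 lnn0[OF that] by simp
    then show ?thesis unfolding Lf_def by linarith
  qed
  have Lf_ge: "real (Lf n) \<ge> K * ln (real n) - 1" if "n \<ge> n3" for n
  proof -
    have "K * ln (real n) \<ge> 0" using K0 lnn0[OF that] by simp
    then show ?thesis unfolding Lf_def by linarith
  qed
  have good: "\<exists>C D N. C \<ge> 0 \<and> (\<forall>n\<ge>N. real (cnt T n) \<le> C * (ln ^^ Suc k) (real n) + D)" for k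
  proof (induction k)
    case 0
    have "real (cnt T n) \<le> K * (ln ^^ Suc 0) (real n) + (1 + real e)" if "n \<ge> n3" for n
    proof -
      have "real (cnt T n) \<le> real (cnt T (Lf n)) + real e" using step[OF that] by linarith
      also have "\<dots> \<le> real (Lf n) + 1 + real e" using cnt_le[of T "Lf n"] by simp
      also have "\<dots> \<le> K * ln (real n) + 1 + real e" using Lf_le[OF that] by simp
      finally show ?thesis by simp
    qed
    then show ?case using K0 by (intro exI[of _ K] exI[of _ "1 + real e"] exI[of _ n3]) auto
  next
    case (Suc k)
    obtain C D N where CDN: "C \<ge> 0" "\<And>n. n \<ge> N \<Longrightarrow> real (cnt T n) \<le> C * (ln ^^ Suc k) (real n) + D"
      using Suc.IH by blast
    obtain DK Y0 where DK: "\<And>y. y \<ge> Y0 \<Longrightarrow> (ln ^^ Suc k) (K * y) \<le> (ln ^^ Suc k) y + DK"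
      using ln_funpow_scale[of "Suc k" K] K0 by auto
    define E where "E = (exp ^^ Suc k) (0::real)"
    define B where "B = \<bar>real N\<bar> + \<bar>E\<bar> + 1"
    define N' where "N' = max n3 (nat \<lceil>exp ((B + 1) / K + \<bar>Y0\<bar>)\<rceil>)"
    have "real (cnt T n) \<le> C * (ln ^^ Suc (Suc k)) (real n) + (C * DK + D + real e)" if n: "n \<ge> N'" for n
    proof -
      have nn3: "n \<ge> n3" using n unfolding N'_def by simp
      have n0: "real n > 0" using n3(2)[OF nn3] by simp
      have "exp ((B + 1) / K + \<bar>Y0\<bar>) \<le> real (nat \<lceil>exp ((B + 1) / K + \<bar>Y0\<bar>)\<rceil>)" by linarith
      also have "\<dots> \<le> real n"
      proof -
        have "nat \<lceil>exp ((B + 1) / K + \<bar>Y0\<bar>)\<rceil> \<le> n" using n unfolding N'_def by (metis max.bounded_iff)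
        then show ?thesis by (simp only: of_nat_le_iff)
      qed
      finally have "(B + 1) / K + \<bar>Y0\<bar> \<le> ln (real n)" using n0 by (metis exp_le_cancel_iff exp_ln)
      moreover have "(B + 1) / K \<ge> 0" using K0 unfolding B_def by simp
      ultimately have l1: "(B + 1) / K \<le> ln (real n)" and l2: "Y0 \<le> ln (real n)" by linarith+
      have KB: "B + 1 \<le> K * ln (real n)" using l1 K0 by (simp add: pos_divide_le_eq mult.commute)
      have LB: "real (Lf n) \<ge> B" using Lf_ge[OF nn3] KB by simp
      then have LN: "Lf n \<ge> N" unfolding B_def by simp
      have LE: "E \<le> real (Lf n)" using LB unfolding B_def by simp
      have "real (cnt T n) \<le> real (cnt T (Lf n)) + real e" using step[OF nn3] by linarith
      also have "\<dots> \<le> C * (ln ^^ Suc k) (real (Lf n)) + D + real e" using CDN(2)[OF LN] by simp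
      also have "\<dots> \<le> C * (ln ^^ Suc k) (K * ln (real n)) + D + real e"
      proof -
        have "(ln ^^ Suc k) (real (Lf n)) \<le> (ln ^^ Suc k) (K * ln (real n))"
          by (rule ln_funpow_mono) (use LE Lf_le[OF nn3] in \<open>auto simp: E_def\<close>)
        then show ?thesis using CDN(1) by (simp add: mult_left_mono)
      qed
      also have "\<dots> \<le> C * ((ln ^^ Suc k) (ln (real n)) + DK) + D + real e"
        using DK[OF l2] CDN(1) by (simp add: mult_left_mono)
      also have "(ln ^^ Suc k) (ln (real n)) = (ln ^^ Suc (Suc k)) (real n)"
        by (simp only: funpow_Suc_right[of "Suc k"] o_apply)
      finally show ?thesis by (simp add: algebra_simps)
    qed
    then show ?case using CDN(1) by blast
  qed
  obtain C D N where CDN: "C \<ge> 0" "\<And>n. n \<ge> N \<Longrightarrow> real (cnt T n) \<le> C * (ln ^^ Suc (Suc m)) (real n) + D"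
    using good[of "Suc m"] by blast
  show ?thesis
  proof (rule landau_o.smallI)
    fix c :: real assume c: "c > 0"
    obtain Y0 where Y0: "Y0 \<ge> 1" "\<And>Y. Y \<ge> Y0 \<Longrightarrow> C * ln Y + D \<le> c * Y"
      using ln_lin[OF CDN(1) c, of D] by blast
    have lim: "filterlim (\<lambda>n. (ln ^^ Suc m) (real n)) at_top sequentially"
      by (rule filterlim_compose[OF ln_funpow_at_top filterlim_real_sequentially])
    have ev1: "eventually (\<lambda>n. Y0 \<le> (ln ^^ Suc m) (real n)) sequentially"
      using lim unfolding filterlim_at_top by blast
    have ev2: "eventually (\<lambda>n. n \<ge> N) sequentially" by (rule eventually_ge_at_top)
    show "eventually (\<lambda>n. norm (real (cnt T n)) \<le> c * norm ((ln ^^ Suc m) (real n))) sequentially"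
      using ev1 ev2
    proof eventually_elim
      case (elim n)
      define Y where "Y = (ln ^^ Suc m) (real n)"
      have "real (cnt T n) \<le> C * ln Y + D" using CDN(2)[OF elim(2)] unfolding Y_def by simp
      also have "\<dots> \<le> c * Y" using Y0(2) elim(1) unfolding Y_def by simp
      finally show ?case using elim(1) Y0(1) unfolding Y_def by simp
    qed
  qed
qed


lemma nonarch_nav: "nonarch_local_field av p \<Longrightarrow> nav av"
  unfolding nonarch_local_field_def nav_def by blast

context nav
begin

lemma padic_lb:
  assumes pr: "prime p" and avp: "av (of_nat p) = 1 / real p"
  shows "m \<ge> 1 \<Longrightarrow> av (of_nat m) \<ge> 1 / real m"
proof (induction m rule: less_induct)
  case (less m)
  have p2: "p \<ge> 2" using pr by (rule prime_ge_2_nat)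
  show ?case
  proof (cases "p dvd m")
    case True
    then obtain k where k: "m = p * k" by blast
    have k1: "k \<ge> 1" using less.prems k by (cases k) auto
    have km: "k < m" using k p2 k1 by simp
    have ih: "av (of_nat k) \<ge> 1 / real k" using less.IH[OF km k1] .
    have "av (of_nat m) = av (of_nat p) * av (of_nat k)" using k by (simp add: mult)
    also have "\<dots> \<ge> (1 / real p) * (1 / real k)"
      unfolding avp using ih p2 by (intro mult_left_mono) auto
    finally show ?thesis using k by simp
  next
    case False
    have cop: "coprime p m" by (rule prime_imp_coprime[OF pr False])
    then have "gcd (int p) (int m) = 1" by (simp add: coprime_iff_gcd_eq_1)
    then obtain u v :: int where uv: "u * int p + v * int m = 1" using bezout_int[of "int p" "int m"] by auto
    have one: "(1::'k) = of_int u * of_nat p + of_int v * of_nat m"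
    proof -
      have "(of_int (u * int p + v * int m) :: 'k) = 1" using uv by simp
      then show ?thesis by simp
    qed
    have a1: "av (of_int u * (of_nat p :: 'k)) < 1"
    proof -
      have "av (of_int u * (of_nat p :: 'k)) = av (of_int u :: 'k) * (1 / real p)" by (simp add: mult avp)
      also have "\<dots> \<le> 1 / real p" using av_of_int_le[of u] p2 by (simp add: divide_right_mono)
      also have "\<dots> < 1" using p2 by simp
      finally show ?thesis .
    qed
    have "1 \<le> max (av (of_int u * (of_nat p :: 'k))) (av (of_int v * (of_nat m :: 'k)))"
      using ultra[of "of_int u * of_nat p" "of_int v * of_nat m"] one by simp
    then have "1 \<le> av (of_int v :: 'k) * av (of_nat m :: 'k)" using a1 by (simp add: mult)
    moreover have "av (of_int v :: 'k) * av (of_nat m :: 'k) \<le> av (of_nat m :: 'k)"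
      using av_of_int_le[of v] nn by (simp add: mult_left_le_one_le)
    ultimately have "av (of_nat m :: 'k) \<ge> 1" by simp
    moreover have "1 / real m \<le> 1" using less.prems by simp
    ultimately show ?thesis by simp
  qed
qed

lemma padic_dist:
  assumes pr: "prime p" and avp: "av (of_nat p) = 1 / real p"
    and ij: "i \<noteq> j" "i \<le> n" "j \<le> n"
  shows "av (of_nat i - of_nat j :: 'k) \<ge> 1 / real n"
proof -
  have key: "av (of_nat x - of_nat y :: 'k) \<ge> 1 / real n" if "y < x" "x \<le> n" for x y
  proof -
    have "(of_nat x - of_nat y :: 'k) = of_nat (x - y)" using that by (simp add: of_nat_diff)
    moreover have "av (of_nat (x - y) :: 'k) \<ge> 1 / real (x - y)" using padic_lb[OF pr avp, of "x - y"] that by simp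
    moreover have "1 / real n \<le> 1 / real (x - y)" using that by (simp add: frac_le)
    ultimately show ?thesis by simp
  qed
  show ?thesis
  proof (cases "j < i")
    case True then show ?thesis using key ij by simp
  next
    case False
    then have "i < j" using ij by simp
    then show ?thesis using key[of i j] ij av_sub_comm[of "of_nat i :: 'k" "of_nat j"] by simp
  qed
qed

end


theorem proposition4p2:
  fixes av :: "'k::field \<Rightarrow> real" and p N :: nat and F g :: "nat \<Rightarrow> 'k ser"
    and V :: "(nat \<Rightarrow> 'k) set" and a :: "nat \<Rightarrow> 'k" and A :: "nat \<Rightarrow> nat \<Rightarrow> 'k"
    and c :: real
  assumes "prime p" and "p \<ge> 3" and "nonarch_local_field av p" and "N \<ge> 2"
    and "analytic_subvariety av N V"
    and "a \<in> disk av N" and "\<forall>i<N. av (a i) < 1"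
    and "\<forall>i<N. tate av N (F i)"
    and "\<forall>i<N. \<forall>j<N. av (A i j) \<le> 1"
    and "\<forall>i<N. \<forall>\<beta>. av (F i \<beta> - lin_ser N A i \<beta>) < 1"
    and "\<forall>i<N. \<forall>j<N. (\<Sum>k<N. A i k * A k j) = A i j"
    and "c > 1 / (real p - 1)"
    and "\<forall>i<N. tate av (Suc N) (g i)"
    and "\<forall>n::nat. tuple_gnorm av N N
           (\<lambda>i \<beta>. ser_subst av (Suc N) (g i) (zsub N (of_nat n)) \<beta> - ser_iter av N F n i \<beta>)
         \<le> real p powr (- (real n * c))"
    and "\<not> (\<exists>M. \<forall>n\<ge>M. Gpt av N g a (of_nat n) \<in> V)"
    and "\<forall>n>0. \<not> (\<exists>q. q \<in> V \<and> (\<exists>r>0. (Fmap av N F ^^ r) q = q) \<and>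
                    (\<lambda>k. pt_dist av N ((Fmap av N F ^^ (n * k)) a) q) \<longlonglongrightarrow> 0)"
  shows "\<forall>m>0. (\<lambda>n. real (card {i. i \<le> n \<and> (Fmap av N F ^^ i) a \<in> V}))
                 \<in> o(\<lambda>n. (ln ^^ m) (real n))"
proof -
  interpret nav av using nonarch_nav[OF assms(3)] .
  have avp: "av (of_nat p) = 1 / real p" using assms(3) unfolding nonarch_local_field_def by blast
  have pr: "prime p" by (rule assms(1))
  have p3: "real p \<ge> 3" using assms(2) by simp
  have c0: "c > 0"
  proof -
    have "1 / (real p - 1) > 0" using p3 by simp
    then show ?thesis using assms(12) by linarith
  qed
  define c' where "c' = c * ln (real p)"
  have c'0: "c' > 0" unfolding c'_def using c0 p3 by simp
  obtain H where H: "finite H" "\<And>h. h \<in> H \<Longrightarrow> tate av N h"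
    "V = {x \<in> disk av N. \<forall>h\<in>H. ser_eval av N h x = 0}"
    using assms(5) unfolding analytic_subvariety_def by blast
  have a1: "\<And>i. i < N \<Longrightarrow> av (a i) \<le> 1" using assms(6) by (rule disk_le1)
  have tF: "\<And>i. i < N \<Longrightarrow> tate av N (F i)" using assms(8) by blast
  have tg: "\<And>i. i < N \<Longrightarrow> tate av (Suc N) (g i)" using assms(13) by blast
  have IT: "(Fmap av N F ^^ n) a \<in> disk av N \<and> (\<forall>i<N. tate av N (ser_iter av N F n i) \<and>
            ser_eval av N (ser_iter av N F n i) a = (Fmap av N F ^^ n) a i)" for n
    by (rule iter_facts[OF tF assms(6)])
  define q where "q t = (\<lambda>j. if j < N then a j else if j = N then t else (0::'k))" for t
  have q1: "av (q t j) \<le> 1" if "av t \<le> 1" "j < Suc N" for t j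
    using that a1 unfolding q_def by auto
  have Gpt_eq: "Gpt av N g a t i = (if i < N then ser_eval av (Suc N) (g i) (q t) else 0)" for t i
    unfolding Gpt_def q_def by simp
  have Gdisk: "Gpt av N g a t \<in> disk av N" if t: "av t \<le> 1" for t
    unfolding disk_def using Gpt_eq ev_le1[OF tg q1[OF t]] by auto
  have tz: "tate av N (zsub N (of_nat n) j)" if "j < Suc N" for n j
    using that unfolding zsub_def by (auto intro: tate_var tate_const av_of_nat_le)
  have Gsub: "ser_eval av N (ser_subst av (Suc N) (g i) (zsub N (of_nat n))) a = Gpt av N g a (of_nat n) i"
    if i: "i < N" for n i
  proof -
    have "ser_eval av N (ser_subst av (Suc N) (g i) (zsub N (of_nat n))) a
        = ser_eval av (Suc N) (g i) (\<lambda>j. ser_eval av N (zsub N (of_nat n) j) a)"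
      by (rule ev_subst[of "Suc N" "g i" N "zsub N (of_nat n)" a, OF tg[OF i] tz a1])
    also have "\<dots> = ser_eval av (Suc N) (g i) (q (of_nat n))"
    proof (rule ser_eval_cong)
      fix j assume j: "j < Suc N"
      show "ser_eval av N (zsub N (of_nat n) j) a = q (of_nat n) j"
      proof (cases "j < N")
        case True then show ?thesis unfolding zsub_def q_def using ev_var[OF a1 True] by simp
      next
        case False
        then have "j = N" using j by simp
        then show ?thesis unfolding zsub_def q_def using ev_const[OF a1 av_of_nat_le] by simp
      qed
    qed
    also have "\<dots> = Gpt av N g a (of_nat n) i" using Gpt_eq i by simp
    finally show ?thesis .
  qed
  have dist: "av (Gpt av N g a (of_nat n) i - (Fmap av N F ^^ n) a i) \<le> real p powr (- (real n * c))"
    if i: "i < N" for n i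
  proof -
    define S where "S = ser_subst av (Suc N) (g i) (zsub N (of_nat n))"
    define I where "I = ser_iter av N F n i"
    have tS: "tate av N S" unfolding S_def by (rule tate_subst[of "Suc N" "g i" N, OF tg[OF i] tz])
    have tI: "tate av N I" unfolding I_def using IT[of n] i by blast
    have eS: "ser_eval av N S a = Gpt av N g a (of_nat n) i" unfolding S_def by (rule Gsub[OF i])
    have eI: "ser_eval av N I a = (Fmap av N F ^^ n) a i" unfolding I_def using IT[of n] i by blast
    have hd: "hs (\<lambda>\<beta>. S \<beta> * mon N a \<beta> - I \<beta> * mon N a \<beta>) (multi N) (ser_eval av N S a - ser_eval av N I a)"
      by (rule hs_diff[OF ev_hs[of N S a, OF tS a1] ev_hs[of N I a, OF tI a1]])
    define u where "u = (\<lambda>i \<beta>. ser_subst av (Suc N) (g i) (zsub N (of_nat n)) \<beta> - ser_iter av N F n i \<beta>)"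
    define X where "X = (\<lambda>(i, \<alpha>). av (u i \<alpha>)) ` ({..<N} \<times> multi N)"
    have bdd: "bdd_above X"
    proof (rule bdd_aboveI)
      fix x assume "x \<in> X"
      then obtain i' \<alpha> where "x = av (u i' \<alpha>)" "i' < N" unfolding X_def by auto
      moreover have "av (u i' \<alpha>) \<le> 1"
      proof -
        have t1: "tate av N (ser_subst av (Suc N) (g i') (zsub N (of_nat n)))"
          by (rule tate_subst[of "Suc N" "g i'" N, OF tg[OF \<open>i' < N\<close>] tz])
        have t2: "tate av N (ser_iter av N F n i')" using IT[of n] \<open>i' < N\<close> by blast
        show ?thesis unfolding u_def by (rule ultra_diff_le[OF tate_le1[OF t1] tate_le1[OF t2]])
      qed
      ultimately show "x \<le> 1" by simp
    qed
    have gn: "tuple_gnorm av N N u \<le> real p powr (- (real n * c))" using assms(14) unfolding u_def by blast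
    have "av ((S \<beta> - I \<beta>) * mon N a \<beta>) \<le> real p powr (- (real n * c))" if b: "\<beta> \<in> multi N" for \<beta>
    proof -
      have "av (u i \<beta>) \<in> X" unfolding X_def using i b by force
      then have "av (u i \<beta>) \<le> Sup X" using bdd by (rule cSup_upper)
      also have "Sup X = tuple_gnorm av N N u" unfolding X_def tuple_gnorm_def ..
      finally have "av (S \<beta> - I \<beta>) \<le> real p powr (- (real n * c))"
        using gn unfolding u_def S_def I_def by simp
      then show ?thesis using av_mon_le1[of N a, OF a1] by (intro mult_le1_le)
    qed
    then have "av (ser_eval av N S a - ser_eval av N I a) \<le> real p powr (- (real n * c))"
      using hs_bound[OF hd, where B="real p powr (- (real n * c))"] by (simp add: algebra_simps)
    then show ?thesis using eS eI by simp
  qed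
  obtain n0 where n0: "Gpt av N g a (of_nat n0) \<notin> V" using assms(15) by blast
  obtain h0 where h0: "h0 \<in> H" "ser_eval av N h0 (Gpt av N g a (of_nat n0)) \<noteq> 0"
    using n0 Gdisk[OF av_of_nat_le] H(3) by blast
  have th0: "tate av N h0" using H(2)[OF h0(1)] .
  define inn where "inn j = (if j < N then ser_const (a j) else ser_var 0)" for j
  have tinn: "tate av 1 (inn j)" if "j < Suc N" for j
    unfolding inn_def using a1 that by (auto intro: tate_const tate_var)
  define Gs where "Gs i = ser_subst av (Suc N) (g i) inn" for i
  have tGs: "tate av 1 (Gs i)" if i: "i < N" for i
    unfolding Gs_def by (rule tate_subst[of "Suc N" "g i" 1 inn, OF tg[OF i] tinn])
  define \<Psi> where "\<Psi> = ser_subst av N h0 Gs"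
  have t\<Psi>: "tate av 1 \<Psi>" unfolding \<Psi>_def by (rule tate_subst[of N h0 1 Gs, OF th0 tGs])
  have PhiEq: "ser_eval av 1 \<Psi> (\<lambda>_. t) = ser_eval av N h0 (Gpt av N g a t)" if t: "av t \<le> 1" for t
  proof -
    have t1: "\<And>i. i < 1 \<Longrightarrow> av ((\<lambda>_. t) i) \<le> 1" using t by simp
    have "ser_eval av 1 \<Psi> (\<lambda>_. t) = ser_eval av N h0 (\<lambda>i. ser_eval av 1 (Gs i) (\<lambda>_. t))"
      unfolding \<Psi>_def by (rule ev_subst) (use th0 tGs t in auto)
    also have "\<dots> = ser_eval av N h0 (Gpt av N g a t)"
    proof (rule ser_eval_cong)
      fix i assume i: "i < N"
      have "ser_eval av 1 (Gs i) (\<lambda>_. t) = ser_eval av (Suc N) (g i) (\<lambda>j. ser_eval av 1 (inn j) (\<lambda>_. t))"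
        unfolding Gs_def by (rule ev_subst) (use tg[OF i] tinn t in auto)
      also have "\<dots> = ser_eval av (Suc N) (g i) (q t)"
      proof (rule ser_eval_cong)
        fix j assume j: "j < Suc N"
        show "ser_eval av 1 (inn j) (\<lambda>_. t) = q t j"
        proof (cases "j < N")
          case True
          have "ser_eval av 1 (ser_const (a j)) (\<lambda>_. t) = a j"
            by (rule ev_const) (use t a1[OF True] in auto)
          then show ?thesis unfolding inn_def q_def using True by simp
        next
          case False
          then have "j = N" using j by simp
          have "ser_eval av 1 (ser_var 0) (\<lambda>_. t) = t"
            using ev_var[of 1 "\<lambda>_. t" 0] t by simp
          then show ?thesis unfolding inn_def q_def using \<open>j = N\<close> by simp
        qed
      qed
      also have "\<dots> = Gpt av N g a t i" using Gpt_eq i by simp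
      finally show "ser_eval av 1 (Gs i) (\<lambda>_. t) = Gpt av N g a t i" .
    qed
    finally show ?thesis .
  qed
  define b where "b k = \<Psi> (iota k)" for k
  have nb: "nul b UNIV" unfolding b_def by (rule onevar_nul[OF t\<Psi>])
  have hb: "hs (\<lambda>k. b k * z ^ k) UNIV (ser_eval av 1 \<Psi> (\<lambda>_. z))" if "av z \<le> 1" for z
    unfolding b_def by (rule onevar_hs[OF t\<Psi> that])
  obtain k0 where k0: "b k0 \<noteq> 0"
  proof (rule ccontr)
    assume "\<not> thesis"
    then have b0: "\<And>k. b k = 0" using that by blast
    have "hs (\<lambda>k. b k * (of_nat n0) ^ k) UNIV (0::'k)" using hs_zero b0 by simp
    then have "ser_eval av 1 \<Psi> (\<lambda>_. of_nat n0) = 0"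
      using hs_unique[OF hb[OF av_of_nat_le]] by blast
    then show False using h0(2) PhiEq[OF av_of_nat_le] by simp
  qed
  obtain e lam where lam: "av (b e) = lam" "lam > 0" "\<And>k. av (b k) \<le> lam" "\<And>k. k > e \<Longrightarrow> av (b k) < lam"
    using lam_exists[OF nb k0] by blast
  define T where "T = {n. av (ser_eval av N h0 (Gpt av N g a (of_nat n))) \<le> real p powr (- (real n * c))}"
  have Ssub: "{i. i \<le> n \<and> (Fmap av N F ^^ i) a \<in> V} \<subseteq> {i. i \<le> n \<and> i \<in> T}" for n
  proof safe
    fix i assume i: "i \<le> n" "(Fmap av N F ^^ i) a \<in> V"
    define d where "d = real p powr (- (real i * c))"
    have d0: "0 \<le> d" unfolding d_def by simp
    have z: "ser_eval av N h0 ((Fmap av N F ^^ i) a) = 0" using i(2) H(3) h0(1) by blast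
    have Gd: "Gpt av N g a (of_nat i) \<in> disk av N" by (rule Gdisk[OF av_of_nat_le])
    have Fd: "(Fmap av N F ^^ i) a \<in> disk av N" using IT[of i] by blast
    have "av (ser_eval av N h0 (Gpt av N g a (of_nat i)) - ser_eval av N h0 ((Fmap av N F ^^ i) a)) \<le> d"
    proof (rule ev_lip[OF th0 disk_le1[OF Gd] disk_le1[OF Fd] _ d0])
      fix j assume "j < N"
      then show "av (Gpt av N g a (of_nat i) j - (Fmap av N F ^^ i) a j) \<le> d"
        unfolding d_def by (rule dist)
    qed
    then show "i \<in> T" unfolding T_def d_def using z by simp
  qed
  have Grow: "lam * exp (c' * real t) \<le> real n ^ e"
    if t: "t \<in> T" and n1: "1 \<le> n" and cd: "e + 1 \<le> card (T \<inter> {t..n})" for t n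
  proof -
    obtain Z where Z: "Z \<subseteq> T \<inter> {t..n}" "card Z = e + 1" "finite Z"
      using obtain_subset_with_card_n[OF cd] by blast
    define zs where "zs = map (of_nat :: nat \<Rightarrow> 'k) (sorted_list_of_set Z)"
    have injn: "inj_on (of_nat :: nat \<Rightarrow> 'k) Z"
    proof (rule inj_onI)
      fix x y assume xy: "x \<in> Z" "y \<in> Z" "(of_nat x :: 'k) = of_nat y"
      show "x = y"
      proof (rule ccontr)
        assume ne: "x \<noteq> y"
        have "av (of_nat x - of_nat y :: 'k) \<ge> 1 / real (max x y)"
          using padic_dist[OF pr avp ne] by simp
        moreover have "max x y \<ge> 1" using ne by auto
        ultimately show False using xy(3) by simp
      qed
    qed
    have setzs: "set zs = of_nat ` Z" unfolding zs_def using Z(3) by simp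
    have dzs: "distinct zs" unfolding zs_def using injn Z(3) by (simp add: distinct_map)
    have lzs: "length zs = e + 1" unfolding zs_def using Z(2) by simp
    define eps where "eps = real p powr (- (real t * c))"
    have eps0: "eps > 0" unfolding eps_def using p3 by simp
    have z1: "av z \<le> 1" if "z \<in> set zs" for z using that setzs av_of_nat_le by auto
    have zeps: "av (ser_eval av 1 \<Psi> (\<lambda>_. z)) \<le> eps" if z: "z \<in> set zs" for z
    proof -
      have "z \<in> of_nat ` Z" using z setzs by simp
      then obtain i where i: "i \<in> Z" "z = of_nat i" by blast
      have iT: "i \<in> T" and ti: "t \<le> i" using i(1) Z(1) by auto
      have "ser_eval av 1 \<Psi> (\<lambda>_. z) = ser_eval av N h0 (Gpt av N g a (of_nat i))"
        using PhiEq[OF av_of_nat_le] i(2) by simp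
      moreover have "av (ser_eval av N h0 (Gpt av N g a (of_nat i))) \<le> real p powr (- (real i * c))"
        using iT unfolding T_def by simp
      moreover have "real p powr (- (real i * c)) \<le> eps" unfolding eps_def
        using ti c0 p3 by (intro powr_mono) (auto simp: mult_right_mono)
      ultimately show ?thesis by simp
    qed
    have rsep: "1 / real n \<le> av (z - w)" if zw: "z \<in> set zs" "w \<in> set zs" "z \<noteq> w" for z w
    proof -
      obtain i where i: "i \<in> Z" "z = of_nat i" using zw(1) setzs by auto
      obtain j where j: "j \<in> Z" "w = of_nat j" using zw(2) setzs by auto
      have ij: "i \<in> Z" "j \<in> Z" "z = of_nat i" "w = of_nat j" using i j by auto
      have "i \<noteq> j" using ij zw(3) by auto
      moreover have "i \<le> n" "j \<le> n" using ij Z(1) by auto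
      ultimately show ?thesis using padic_dist[OF pr avp] ij by simp
    qed
    have r0: "1 / real n > 0" using n1 by simp
    have main: "lam * (1 / real n) ^ e \<le> eps"
      by (rule dd_main[OF nb lam(1,2,3,4) hb dzs lzs z1 zeps eps0 rsep r0])
    have "eps = exp (- (c' * real t))" unfolding eps_def c'_def using p3
      by (simp add: powr_def algebra_simps)
    then have "lam / real n ^ e \<le> exp (- (c' * real t))" using main by (simp add: power_divide)
    then have "lam \<le> exp (- (c' * real t)) * real n ^ e" using n1 by (simp add: divide_le_eq)
    then have "lam * exp (c' * real t) \<le> exp (- (c' * real t)) * real n ^ e * exp (c' * real t)"
      by (simp add: mult_right_mono)
    also have "\<dots> = real n ^ e" by (simp add: exp_minus field_simps)
    finally show ?thesis .
  qed
  show ?thesis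
  proof (intro allI impI)
    fix m :: nat assume "m > 0"
    then obtain m' where m: "m = Suc m'" by (cases m) auto
    have small: "(\<lambda>n. real (cnt T n)) \<in> o(\<lambda>n. (ln ^^ Suc m') (real n))"
      by (rule count_small[OF lam(2) c'0 Grow])
    have big: "(\<lambda>n. real (card {i. i \<le> n \<and> (Fmap av N F ^^ i) a \<in> V})) \<in> O(\<lambda>n. real (cnt T n))"
    proof (rule landau_o.bigI[of 1])
      show "eventually (\<lambda>n. norm (real (card {i. i \<le> n \<and> (Fmap av N F ^^ i) a \<in> V})) \<le> 1 * norm (real (cnt T n))) sequentially"
      proof (rule always_eventually, rule allI)
        fix n
        have "card {i. i \<le> n \<and> (Fmap av N F ^^ i) a \<in> V} \<le> cnt T n"
          unfolding cnt_def by (rule card_mono[OF _ Ssub]) simp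
        then show "norm (real (card {i. i \<le> n \<and> (Fmap av N F ^^ i) a \<in> V})) \<le> 1 * norm (real (cnt T n))" by simp
      qed
    qed simp
    show "(\<lambda>n. real (card {i. i \<le> n \<and> (Fmap av N F ^^ i) a \<in> V})) \<in> o(\<lambda>n. (ln ^^ m) (real n))"
      unfolding m by (rule landau_o.big_small_trans[OF big small])
  qed
qed


end
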